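(* For every $n\ge 1$, the Baumslag–Solitar group $BS(1,n)=\langle a,t\mid tat^{-1}=a^n\rangle$ has property (PPH).
   Context: An isometric action on a metric space $Z$ is proper if for all $z\in Z$, $r>0$, $\{g: d(z,gz)\le r\}$ is finite. A group $G$ has property (PPH) if there exist unbounded proper Gromov-hyperbolic (geodesic) spaces $X_1,\ldots,X_l$ on which $G$ acts isometrically and cocompactly such that the diagonal action $g(x_1,\ldots,x_l)=(gx_1,\ldots,gx_l)$ on $\prod_{i=1}^lX_i$ with the $\ell^1$-metric is proper. *)

theory Defs
  imports "HOL-Analysis.Analysis" "HOL-Algebra.Group_Action"
begin

text \<open>Concrete model: the semidirect product Z[1/n] x| Z.  The generators are a = (0, 1) and t = (1, 0);
  one checks t a t^-1 = (0, n) = a^n, and this is the standard realisation of the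
  presentation < a, t | t a t^-1 = a^n >.\<close>

definition n_adic :: "nat \<Rightarrow> rat set" where
  "n_adic n = {b. \<exists>j::nat. b * (of_nat n) ^ j \<in> \<int>}"

definition BS1 :: "nat \<Rightarrow> (int \<times> rat) monoid" where
  "BS1 n = \<lparr> carrier = UNIV \<times> n_adic n,
             mult = (\<lambda>(k, b) (k', b'). (k + k', b + (of_nat n) powi k * b')),
             one = (0, 0) \<rparr>"

definition BS_a :: "int \<times> rat" where "BS_a = (0, 1)"
definition BS_t :: "int \<times> rat" where "BS_t = (1, 0)"

definition proper_metric :: "'a set \<Rightarrow> ('a \<Rightarrow> 'a \<Rightarrow> real) \<Rightarrow> bool" where
  "proper_metric M d \<longleftrightarrow>
     (\<forall>x\<in>M. \<forall>r. compactin (Metric_space.mtopology M d) (Metric_space.mcball M d x r))"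

definition geodesic_metric :: "'a set \<Rightarrow> ('a \<Rightarrow> 'a \<Rightarrow> real) \<Rightarrow> bool" where
  "geodesic_metric M d \<longleftrightarrow>
     (\<forall>x\<in>M. \<forall>y\<in>M. \<exists>\<gamma>::real \<Rightarrow> 'a.
        \<gamma> 0 = x \<and> \<gamma> (d x y) = y \<and> \<gamma> ` {0..d x y} \<subseteq> M \<and>
        (\<forall>s\<in>{0..d x y}. \<forall>u\<in>{0..d x y}. d (\<gamma> s) (\<gamma> u) = \<bar>s - u\<bar>))"

definition gromov_product :: "('a \<Rightarrow> 'a \<Rightarrow> real) \<Rightarrow> 'a \<Rightarrow> 'a \<Rightarrow> 'a \<Rightarrow> real" where
  "gromov_product d w x y = (d w x + d w y - d x y) / 2"

definition gromov_hyperbolic :: "'a set \<Rightarrow> ('a \<Rightarrow> 'a \<Rightarrow> real) \<Rightarrow> bool" where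
  "gromov_hyperbolic M d \<longleftrightarrow>
     (\<exists>\<delta>\<ge>0. \<forall>w\<in>M. \<forall>x\<in>M. \<forall>y\<in>M. \<forall>z\<in>M.
        gromov_product d w x z \<ge> min (gromov_product d w x y) (gromov_product d w y z) - \<delta>)"

definition unbounded_metric :: "'a set \<Rightarrow> ('a \<Rightarrow> 'a \<Rightarrow> real) \<Rightarrow> bool" where
  "unbounded_metric M d \<longleftrightarrow> (\<forall>x\<in>M. \<forall>B. \<exists>y\<in>M. d x y > B) \<and> M \<noteq> {}"

definition isometric_action ::
  "('g, 'm) monoid_scheme \<Rightarrow> 'a set \<Rightarrow> ('a \<Rightarrow> 'a \<Rightarrow> real) \<Rightarrow> ('g \<Rightarrow> 'a \<Rightarrow> 'a) \<Rightarrow> bool" where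
  "isometric_action G M d \<phi> \<longleftrightarrow> group_action G M \<phi> \<and>
     (\<forall>g\<in>carrier G. \<forall>x\<in>M. \<forall>y\<in>M. d (\<phi> g x) (\<phi> g y) = d x y)"

definition cocompact_action ::
  "('g, 'm) monoid_scheme \<Rightarrow> 'a set \<Rightarrow> ('a \<Rightarrow> 'a \<Rightarrow> real) \<Rightarrow> ('g \<Rightarrow> 'a \<Rightarrow> 'a) \<Rightarrow> bool" where
  "cocompact_action G M d \<phi> \<longleftrightarrow>
     (\<exists>K. compactin (Metric_space.mtopology M d) K \<and> (\<Union>g\<in>carrier G. \<phi> g ` K) = M)"

definition proper_action ::
  "('g, 'm) monoid_scheme \<Rightarrow> 'a set \<Rightarrow> ('a \<Rightarrow> 'a \<Rightarrow> real) \<Rightarrow> ('g \<Rightarrow> 'a \<Rightarrow> 'a) \<Rightarrow> bool" where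
  "proper_action G M d \<phi> \<longleftrightarrow>
     (\<forall>z\<in>M. \<forall>r>0. finite {g \<in> carrier G. d z (\<phi> g z) \<le> r})"

definition l1_dist :: "nat \<Rightarrow> (nat \<Rightarrow> 'a \<Rightarrow> 'a \<Rightarrow> real) \<Rightarrow> (nat \<Rightarrow> 'a) \<Rightarrow> (nat \<Rightarrow> 'a) \<Rightarrow> real" where
  "l1_dist l d z w = (\<Sum>i<l. d i (z i) (w i))"

definition diag_action :: "nat \<Rightarrow> (nat \<Rightarrow> 'g \<Rightarrow> 'a \<Rightarrow> 'a) \<Rightarrow> 'g \<Rightarrow> (nat \<Rightarrow> 'a) \<Rightarrow> (nat \<Rightarrow> 'a)" where
  "diag_action l \<phi> g z = (\<lambda>i. if i < l then \<phi> i g (z i) else undefined)"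

text \<open>The spaces are taken inside the ambient type real x real; since every proper metric
  space is separable and hence of cardinality at most the continuum, this is no restriction.\<close>
definition PPH :: "('g, 'm) monoid_scheme \<Rightarrow> bool" where
  "PPH G \<longleftrightarrow>
    (\<exists>(l::nat) (X :: nat \<Rightarrow> (real \<times> real) set) (d :: nat \<Rightarrow> real \<times> real \<Rightarrow> real \<times> real \<Rightarrow> real)
       (\<phi> :: nat \<Rightarrow> 'g \<Rightarrow> real \<times> real \<Rightarrow> real \<times> real).
      (\<forall>i<l. Metric_space (X i) (d i) \<and> unbounded_metric (X i) (d i) \<and>
              proper_metric (X i) (d i) \<and> geodesic_metric (X i) (d i) \<and>
              gromov_hyperbolic (X i) (d i) \<and>
              isometric_action G (X i) (d i) (\<phi> i) \<and> cocompact_action G (X i) (d i) (\<phi> i)) \<and>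
      proper_action G (PiE {..<l} X) (l1_dist l d) (diag_action l \<phi>))"

end

theory Submission
  imports Defs
begin


lemma n_adic_add:
  assumes "b \<in> n_adic n" "c \<in> n_adic n" shows "b + c \<in> n_adic n"
proof -
  obtain i j where i: "b * of_nat n ^ i \<in> \<int>" and j: "c * of_nat n ^ j \<in> \<int>"
    using assms by (auto simp: n_adic_def)
  have "(b + c) * of_nat n ^ (i + j) = (b * of_nat n ^ i) * of_nat n ^ j + (c * of_nat n ^ j) * of_nat n ^ i"
    by (simp add: power_add algebra_simps)
  also have "\<dots> \<in> \<int>" using i j by (metis Ints_add Ints_mult Ints_power Ints_of_nat)
  finally show ?thesis by (auto simp: n_adic_def)
qed

lemma n_adic_uminus:
  assumes "b \<in> n_adic n" shows "- b \<in> n_adic n"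
  using assms by (auto simp: n_adic_def)

lemma n_adic_mult_powi:
  assumes "b \<in> n_adic n" "n \<ge> 1" shows "of_nat n powi k * b \<in> n_adic n"
proof -
  obtain j where j: "b * of_nat n ^ j \<in> \<int>" using assms by (auto simp: n_adic_def)
  show ?thesis
  proof (cases "k \<ge> 0")
    case True
    then have "of_nat n powi k * b = b * of_nat n ^ nat k"
      by (simp add: power_int_def)
    then have "(of_nat n powi k * b) * of_nat n ^ j = (b * of_nat n ^ j) * of_nat n ^ nat k"
      by (metis mult.assoc mult.commute)
    also have "\<dots> \<in> \<int>" using j by (metis Ints_mult Ints_power Ints_of_nat)
    finally show ?thesis by (auto simp: n_adic_def)
  next
    case False
    have n0: "(of_nat n :: rat) \<noteq> 0" using assms by simp
    have "(of_nat n powi k * b) * of_nat n ^ (j + nat (-k)) = b * of_nat n ^ j"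
      using False n0 by (simp add: power_int_def power_add field_simps)
    then have "(of_nat n powi k * b) * of_nat n ^ (j + nat (-k)) \<in> \<int>" using j by metis
    then show ?thesis unfolding n_adic_def by blast
  qed
qed

lemma Ints_n_adic: "b \<in> \<int> \<Longrightarrow> b \<in> n_adic n"
  by (auto simp: n_adic_def intro: exI[of _ 0])

lemma BS1_carrier: "carrier (BS1 n) = UNIV \<times> n_adic n"
  by (simp add: BS1_def)

lemma BS1_mult: "(k, b) \<otimes>\<^bsub>BS1 n\<^esub> (k', b') = (k + k', b + of_nat n powi k * b')"
  by (simp add: BS1_def)

lemma BS1_one: "\<one>\<^bsub>BS1 n\<^esub> = (0, 0)"
  by (simp add: BS1_def)

lemma group_BS1:
  assumes "n \<ge> 1" shows "group (BS1 n)"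
proof (rule groupI)
  have n0: "(of_nat n :: rat) \<noteq> 0" using assms by simp
  fix x y assume "x \<in> carrier (BS1 n)" "y \<in> carrier (BS1 n)"
  then show "x \<otimes>\<^bsub>BS1 n\<^esub> y \<in> carrier (BS1 n)"
    using assms by (cases x, cases y) (auto simp: BS1_carrier BS1_mult intro!: n_adic_add n_adic_mult_powi)
next
  show "\<one>\<^bsub>BS1 n\<^esub> \<in> carrier (BS1 n)" by (auto simp: BS1_carrier BS1_one intro: Ints_n_adic)
next
  have n0: "(of_nat n :: rat) \<noteq> 0" using assms by simp
  fix x y z assume "x \<in> carrier (BS1 n)" "y \<in> carrier (BS1 n)" "z \<in> carrier (BS1 n)"
  then show "x \<otimes>\<^bsub>BS1 n\<^esub> y \<otimes>\<^bsub>BS1 n\<^esub> z = x \<otimes>\<^bsub>BS1 n\<^esub> (y \<otimes>\<^bsub>BS1 n\<^esub> z)"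
    using n0 by (cases x, cases y, cases z) (simp add: BS1_mult power_int_add algebra_simps)
next
  fix x assume "x \<in> carrier (BS1 n)"
  then show "\<one>\<^bsub>BS1 n\<^esub> \<otimes>\<^bsub>BS1 n\<^esub> x = x"
    by (cases x) (simp add: BS1_mult BS1_one)
next
  have n0: "(of_nat n :: rat) \<noteq> 0" using assms by simp
  fix x assume x: "x \<in> carrier (BS1 n)"
  obtain k b where kb: "x = (k, b)" by (cases x)
  have b: "b \<in> n_adic n" using x kb by (simp add: BS1_carrier)
  have "(-k, - (of_nat n powi (-k) * b)) \<in> carrier (BS1 n)"
    using b assms by (simp add: BS1_carrier n_adic_uminus n_adic_mult_powi)
  moreover have "(-k, - (of_nat n powi (-k) * b)) \<otimes>\<^bsub>BS1 n\<^esub> x = \<one>\<^bsub>BS1 n\<^esub>"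
    by (simp add: kb BS1_mult BS1_one)
  ultimately show "\<exists>y\<in>carrier (BS1 n). y \<otimes>\<^bsub>BS1 n\<^esub> x = \<one>\<^bsub>BS1 n\<^esub>" by blast
qed


lemma four_pt:
  fixes a b c p q r e :: real
  assumes "e \<ge> 0"
  "a \<le> max b p + e" "b \<le> max a p + e" "p \<le> max a b + e"
  "b \<le> max c q + e" "c \<le> max b q + e" "q \<le> max b c + e"
  "a \<le> max c r + e" "c \<le> max a r + e" "r \<le> max a c + e"
  "p \<le> max q r + e" "q \<le> max p r + e" "r \<le> max p q + e"
  shows "r + b \<le> max (p + c) (q + a) + 2*e"
  using assms by (simp add: max_def split: if_splits; linarith)

lemma gromov_from_A:
  fixes M :: "'a set" and d :: "'a \<Rightarrow> 'a \<Rightarrow> real" and A :: "'a \<Rightarrow> 'a \<Rightarrow> real" and h :: "'a \<Rightarrow> real"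
  assumes sym: "\<And>p q. p\<in>M \<Longrightarrow> q\<in>M \<Longrightarrow> A p q = A q p"
    and ult: "\<And>p q r. p\<in>M \<Longrightarrow> q\<in>M \<Longrightarrow> r\<in>M \<Longrightarrow> A p q \<le> max (A p r) (A r q) + e"
    and approx: "\<And>p q. p\<in>M \<Longrightarrow> q\<in>M \<Longrightarrow> \<bar>d p q - (2 * A p q - h p - h q)\<bar> \<le> c"
    and e: "e \<ge> 0"
  shows "gromov_hyperbolic M d"
  unfolding gromov_hyperbolic_def
proof (intro exI[of _ "3 * \<bar>c\<bar> + 2 * e"] conjI ballI)
  show "0 \<le> 3 * \<bar>c\<bar> + 2 * e" using e by simp
  fix w x y z assume M: "w \<in> M" "x \<in> M" "y \<in> M" "z \<in> M"
  have F: "A x z + A w y \<le> max (A x y + A w z) (A y z + A w x) + 2 * e"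
    apply (rule four_pt[OF e])
    using M by (metis sym ult)+
  have a1: "\<bar>d w x - (2 * A w x - h w - h x)\<bar> \<le> c" using M approx by blast
  have a2: "\<bar>d w y - (2 * A w y - h w - h y)\<bar> \<le> c" using M approx by blast
  have a3: "\<bar>d w z - (2 * A w z - h w - h z)\<bar> \<le> c" using M approx by blast
  have a4: "\<bar>d x y - (2 * A x y - h x - h y)\<bar> \<le> c" using M approx by blast
  have a5: "\<bar>d y z - (2 * A y z - h y - h z)\<bar> \<le> c" using M approx by blast
  have a6: "\<bar>d x z - (2 * A x z - h x - h z)\<bar> \<le> c" using M approx by blast
  have s: "A x y = A y x" "A w x = A x w" using M sym by auto
  show "min (gromov_product d w x y) (gromov_product d w y z) - (3 * \<bar>c\<bar> + 2 * e)
        \<le> gromov_product d w x z"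
  proof -
    have "A x z + A w y \<le> A x y + A w z + 2 * e \<or> A x z + A w y \<le> A y z + A w x + 2 * e"
      using F by (auto simp: max_def split: if_splits)
    then show ?thesis
    proof
      assume H: "A x z + A w y \<le> A x y + A w z + 2 * e"
      have "(d w x + d w y - d x y) / 2 - (3 * \<bar>c\<bar> + 2 * e) \<le> (d w x + d w z - d x z) / 2"
        using a1 a2 a3 a4 a5 a6 s H abs_ge_self[of c]
          abs_le_D1[OF a1] abs_le_D1[OF a2] abs_le_D1[OF a3] abs_le_D1[OF a4] abs_le_D1[OF a5] abs_le_D1[OF a6]
          abs_le_D2[OF a1] abs_le_D2[OF a2] abs_le_D2[OF a3] abs_le_D2[OF a4] abs_le_D2[OF a5] abs_le_D2[OF a6]
        by argo
      moreover have "min ((d w x + d w y - d x y) / 2) ((d w y + d w z - d y z) / 2) \<le> (d w x + d w y - d x y) / 2"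
        by (rule min.cobounded1)
      ultimately show ?thesis unfolding gromov_product_def by linarith
    next
      assume H: "A x z + A w y \<le> A y z + A w x + 2 * e"
      have "(d w y + d w z - d y z) / 2 - (3 * \<bar>c\<bar> + 2 * e) \<le> (d w x + d w z - d x z) / 2"
        using a1 a2 a3 a4 a5 a6 s H abs_ge_self[of c]
          abs_le_D1[OF a1] abs_le_D1[OF a2] abs_le_D1[OF a3] abs_le_D1[OF a4] abs_le_D1[OF a5] abs_le_D1[OF a6]
          abs_le_D2[OF a1] abs_le_D2[OF a2] abs_le_D2[OF a3] abs_le_D2[OF a4] abs_le_D2[OF a5] abs_le_D2[OF a6]
        by argo
      moreover have "min ((d w x + d w y - d x y) / 2) ((d w y + d w z - d y z) / 2) \<le> (d w y + d w z - d y z) / 2"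
        by (rule min.cobounded2)
      ultimately show ?thesis unfolding gromov_product_def by linarith
    qed
  qed
qed

lemma lip_concat:
  fixes \<gamma> :: "real \<Rightarrow> 'a"
  assumes "Metric_space M d" "a \<le> m" "m \<le> b" "\<gamma> ` {a..b} \<subseteq> M"
    and L1: "\<And>s u. s \<in> {a..m} \<Longrightarrow> u \<in> {a..m} \<Longrightarrow> d (\<gamma> s) (\<gamma> u) \<le> \<bar>s - u\<bar>"
    and L2: "\<And>s u. s \<in> {m..b} \<Longrightarrow> u \<in> {m..b} \<Longrightarrow> d (\<gamma> s) (\<gamma> u) \<le> \<bar>s - u\<bar>"
    and s: "s \<in> {a..b}" and u: "u \<in> {a..b}"
  shows "d (\<gamma> s) (\<gamma> u) \<le> \<bar>s - u\<bar>"
proof -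
  interpret Metric_space M d by fact
  have gm: "\<gamma> m \<in> M" "\<gamma> s \<in> M" "\<gamma> u \<in> M" using assms by auto
  { fix s u assume s: "s \<in> {a..m}" and u: "u \<in> {m..b}"
    have "d (\<gamma> s) (\<gamma> u) \<le> d (\<gamma> s) (\<gamma> m) + d (\<gamma> m) (\<gamma> u)"
      using assms s u by (intro triangle) auto
    also have "\<dots> \<le> \<bar>s - m\<bar> + \<bar>m - u\<bar>"
      using L1[of s m] L2[of m u] s u assms by (intro add_mono) auto
    also have "\<dots> = \<bar>s - u\<bar>" using s u by auto
    finally have "d (\<gamma> s) (\<gamma> u) \<le> \<bar>s - u\<bar>" . }
  note X = this
  show ?thesis
  proof (cases "s \<le> m")
    case True
    show ?thesis
    proof (cases "u \<le> m")
      case True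
      then show ?thesis using \<open>s \<le> m\<close> s u L1 by auto
    next
      case False
      then show ?thesis using \<open>s \<le> m\<close> s u X by auto
    qed
  next
    case False
    show ?thesis
    proof (cases "u \<le> m")
      case True
      then show ?thesis using \<open>\<not> s \<le> m\<close> s u X[of u s] commute by (auto simp: abs_minus_commute)
    next
      case False
      then show ?thesis using \<open>\<not> s \<le> m\<close> s u L2 by auto
    qed
  qed
qed

lemma geodesic_from_lip:
  fixes \<gamma> :: "real \<Rightarrow> 'a"
  assumes "Metric_space M d" "x \<in> M" "y \<in> M" "\<gamma> 0 = x" "\<gamma> (d x y) = y" "\<gamma> ` {0..d x y} \<subseteq> M"
    and L: "\<And>s u. s \<in> {0..d x y} \<Longrightarrow> u \<in> {0..d x y} \<Longrightarrow> d (\<gamma> s) (\<gamma> u) \<le> \<bar>s - u\<bar>"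
  shows "\<forall>s\<in>{0..d x y}. \<forall>u\<in>{0..d x y}. d (\<gamma> s) (\<gamma> u) = \<bar>s - u\<bar>"
proof (intro ballI)
  interpret Metric_space M d by fact
  { fix s u assume s: "s \<in> {0..d x y}" and u: "u \<in> {0..d x y}" and su: "s \<le> u"
    have 0: "0 \<in> {0..d x y}" "d x y \<in> {0..d x y}" by auto
    have "d x y \<le> d x (\<gamma> s) + d (\<gamma> s) y"
      using assms s by (intro triangle) auto
    also have "\<dots> \<le> d x (\<gamma> s) + (d (\<gamma> s) (\<gamma> u) + d (\<gamma> u) y)"
      using assms s u by (intro add_left_mono triangle) auto
    finally have *: "d x y \<le> d x (\<gamma> s) + d (\<gamma> s) (\<gamma> u) + d (\<gamma> u) y" by simp
    have "d x (\<gamma> s) \<le> \<bar>0 - s\<bar>" using L[OF 0(1) s] assms by simp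
    moreover have "d (\<gamma> u) y \<le> \<bar>u - d x y\<bar>" using L[OF u 0(2)] assms by simp
    moreover have "d (\<gamma> s) (\<gamma> u) \<le> \<bar>s - u\<bar>" using L s u by auto
    ultimately have "d (\<gamma> s) (\<gamma> u) = \<bar>s - u\<bar>" using * s u su by auto }
  note X = this
  fix s u assume s: "s \<in> {0..d x y}" and u: "u \<in> {0..d x y}"
  show "d (\<gamma> s) (\<gamma> u) = \<bar>s - u\<bar>"
    using X[OF s u] X[OF u s] commute by (cases "s \<le> u") (auto simp: abs_minus_commute)
qed

lemma cont_to_mtop:
  fixes f :: "'b::metric_space \<Rightarrow> 'a"
  assumes "Metric_space M d" "\<And>x. f x \<in> M"
    and "\<And>x e. e > 0 \<Longrightarrow> \<exists>\<delta>>0. \<forall>y. dist y x < \<delta> \<longrightarrow> d (f x) (f y) < e"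
  shows "continuous_map euclidean (Metric_space.mtopology M d) f"
proof -
  interpret Metric_space M d by fact
  show ?thesis
    unfolding continuous_map_to_metric
  proof (intro ballI allI impI)
    fix x :: 'b and e :: real assume "e > 0"
    then obtain \<delta> where \<delta>: "\<delta> > 0" "\<forall>y. dist y x < \<delta> \<longrightarrow> d (f x) (f y) < e" using assms(3) by blast
    show "\<exists>U. openin euclidean U \<and> x \<in> U \<and> (\<forall>y\<in>U. f y \<in> mball (f x) e)"
      using \<delta> assms(2) by (intro exI[of _ "ball x \<delta>"]) (auto simp: dist_commute)
  qed
qed


definition Zn :: "nat \<Rightarrow> real set" where "Zn n = {r. \<exists>j::nat. r * real n ^ j \<in> \<int>}"
definition good :: "nat \<Rightarrow> real \<Rightarrow> real \<Rightarrow> bool" where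
  "good n q m \<longleftrightarrow> q * real n powi \<lfloor>m\<rfloor> \<in> \<int>"
definition red :: "nat \<Rightarrow> real \<Rightarrow> real \<Rightarrow> real" where
  "red n h z = frac (z * real n powi \<lfloor>h\<rfloor>) / real n powi \<lfloor>h\<rfloor>"
definition T :: "nat \<Rightarrow> (real \<times> real) set" where
  "T n = {p. snd p \<in> Zn n \<and> 0 \<le> snd p * real n powi \<lfloor>fst p\<rfloor> \<and> snd p * real n powi \<lfloor>fst p\<rfloor> < 1}"
definition Jt :: "nat \<Rightarrow> real \<Rightarrow> real \<Rightarrow> real" where
  "Jt n M q = (SOME m0. \<forall>m. (M \<le> m \<and> good n q m) \<longleftrightarrow> m0 \<le> m)"
definition dT :: "nat \<Rightarrow> real \<times> real \<Rightarrow> real \<times> real \<Rightarrow> real" where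
  "dT n p q = (if p \<in> T n \<and> q \<in> T n then 2 * Jt n (max (fst p) (fst q)) (snd p - snd q) - fst p - fst q else 0)"
definition br :: "nat \<Rightarrow> real \<Rightarrow> real \<Rightarrow> real \<times> real" where
  "br n s u = (u, red n u s)"

lemma npowi_pos: "n \<ge> 1 \<Longrightarrow> real n powi k > 0"
  by simp

lemma good_mono:
  assumes n: "n \<ge> 1" and g: "good n q m" and mm: "m \<le> m'" shows "good n q m'"
proof -
  have "\<lfloor>m\<rfloor> \<le> \<lfloor>m'\<rfloor>" using mm by (rule floor_mono)
  define t where "t = nat (\<lfloor>m'\<rfloor> - \<lfloor>m\<rfloor>)"
  have t: "\<lfloor>m'\<rfloor> = \<lfloor>m\<rfloor> + int t" using \<open>\<lfloor>m\<rfloor> \<le> \<lfloor>m'\<rfloor>\<close> by (simp add: t_def)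
  have "q * real n powi \<lfloor>m'\<rfloor> = (q * real n powi \<lfloor>m\<rfloor>) * real n ^ t"
    using n by (simp add: t power_int_add)
  also have "\<dots> \<in> \<int>" using g unfolding good_def by (metis Ints_mult Ints_power Ints_of_nat)
  finally show ?thesis by (simp add: good_def)
qed

lemma good_add: "good n q m \<Longrightarrow> good n q' m \<Longrightarrow> good n (q + q') m"
  by (simp add: good_def distrib_right Ints_add)

lemma good_neg: "good n (- q) m = good n q m"
  by (simp add: good_def)

lemma good_diff: "good n q m \<Longrightarrow> good n q' m \<Longrightarrow> good n (q - q') m"
  using good_add[of n q m "-q'"] good_neg by simp

lemma good_0: "good n 0 m" by (simp add: good_def)

lemma good_shift:
  assumes "n \<ge> 1" shows "good n (real n powi k * q) m \<longleftrightarrow> good n q (m + of_int k)"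
proof -
  have f: "\<lfloor>m + of_int k\<rfloor> = \<lfloor>m\<rfloor> + k" by (rule floor_add_int[symmetric])
  have p: "real n powi (\<lfloor>m\<rfloor> + k) = real n powi \<lfloor>m\<rfloor> * real n powi k"
    by (rule power_int_add) (use assms in simp)
  have "real n powi k * q * real n powi \<lfloor>m\<rfloor> = q * real n powi (\<lfloor>m\<rfloor> + k)"
    unfolding p by (simp only: mult_ac)
  then show ?thesis unfolding good_def f by (simp only:)
qed

lemma Zn_good: assumes "q \<in> Zn n" shows "\<exists>m. good n q m"
proof -
  obtain j :: nat where "q * real n ^ j \<in> \<int>" using assms by (auto simp: Zn_def)
  then have "good n q (real j)" by (simp add: good_def)
  then show ?thesis by blast
qed

lemma Zn_add: "a \<in> Zn n \<Longrightarrow> b \<in> Zn n \<Longrightarrow> a + b \<in> Zn n"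
proof -
  assume "a \<in> Zn n" "b \<in> Zn n"
  then obtain i j where i: "a * real n ^ i \<in> \<int>" and j: "b * real n ^ j \<in> \<int>" by (auto simp: Zn_def)
  have "(a + b) * real n ^ (i + j) = (a * real n ^ i) * real n ^ j + (b * real n ^ j) * real n ^ i"
    by (simp add: power_add algebra_simps)
  also have "\<dots> \<in> \<int>" using i j by (metis Ints_add Ints_mult Ints_power Ints_of_nat)
  finally show ?thesis by (auto simp: Zn_def)
qed

lemma Zn_neg: "a \<in> Zn n \<Longrightarrow> - a \<in> Zn n"
  by (auto simp: Zn_def)

lemma Zn_diff: "a \<in> Zn n \<Longrightarrow> b \<in> Zn n \<Longrightarrow> a - b \<in> Zn n"
  using Zn_add[of a n "-b"] Zn_neg by simp

lemma Zn_Ints: "a \<in> \<int> \<Longrightarrow> a \<in> Zn n"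
  by (auto simp: Zn_def intro: exI[of _ 0])

lemma Zn_mult_powi:
  assumes "b \<in> Zn n" "n \<ge> 1" shows "real n powi k * b \<in> Zn n"
proof -
  obtain j where j: "b * real n ^ j \<in> \<int>" using assms by (auto simp: Zn_def)
  show ?thesis
  proof (cases "k \<ge> 0")
    case True
    then have "real n powi k * b = b * real n ^ nat k"
      by (simp add: power_int_def)
    then have "(real n powi k * b) * real n ^ j = (b * real n ^ j) * real n ^ nat k"
      by (metis mult.assoc mult.commute)
    also have "\<dots> \<in> \<int>" using j by (metis Ints_mult Ints_power Ints_of_nat)
    finally show ?thesis by (auto simp: Zn_def)
  next
    case False
    have n0: "real n \<noteq> 0" using assms by simp
    have "(real n powi k * b) * real n ^ (j + nat (-k)) = b * real n ^ j"
      using False n0 by (simp add: power_int_def power_add field_simps)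
    then have "(real n powi k * b) * real n ^ (j + nat (-k)) \<in> \<int>" using j by metis
    then show ?thesis unfolding Zn_def by blast
  qed
qed

lemma n_adic_Zn:
  assumes "b \<in> n_adic n" shows "of_rat b \<in> Zn n"
proof -
  obtain j where j: "b * of_nat n ^ j \<in> \<int>" using assms by (auto simp: n_adic_def)
  then obtain z where z: "b * of_nat n ^ j = of_int z" by (auto elim: Ints_cases)
  have "of_rat b * real n ^ j = of_rat (b * of_nat n ^ j)" by (simp add: of_rat_mult of_rat_power)
  also have "\<dots> = of_int z" by (simp add: z)
  finally have "of_rat b * real n ^ j = of_int z" .
  then show ?thesis unfolding Zn_def by (intro CollectI exI[of _ j]) simp
qed

lemma Zn_n_adic:
  assumes "r \<in> Zn n" "n \<ge> 1" shows "\<exists>b\<in>n_adic n. of_rat b = r"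
proof -
  obtain j where j: "r * real n ^ j \<in> \<int>" using assms by (auto simp: Zn_def)
  then obtain z where z: "r * real n ^ j = of_int z" by (auto elim: Ints_cases)
  define b :: rat where "b = of_int z / of_nat n ^ j"
  have n0: "real n \<noteq> 0" "(of_nat n :: rat) \<noteq> 0" using assms by auto
  have "b * of_nat n ^ j = of_int z" using n0 by (simp add: b_def)
  then have "b \<in> n_adic n" unfolding n_adic_def by (intro CollectI exI[of _ j]) simp
  moreover have "of_rat b = r" using z n0 by (simp add: b_def of_rat_divide of_rat_power field_simps)
  ultimately show ?thesis by blast
qed

lemma Jt_exists:
  assumes "q \<in> Zn n" "n \<ge> 1"
  shows "\<exists>m0. \<forall>m. (M \<le> m \<and> good n q m) \<longleftrightarrow> m0 \<le> m"
proof (cases "\<forall>m. good n q m")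
  case True
  then show ?thesis by (intro exI[of _ M]) auto
next
  case False
  then obtain m1 where m1: "\<not> good n q m1" by blast
  have gfl: "good n q m \<longleftrightarrow> good n q (of_int \<lfloor>m\<rfloor>)" for m by (simp add: good_def)
  obtain m2 where m2: "good n q m2" using Zn_good[OF assms(1)] by blast
  define S where "S = {i::nat. good n q (of_int (\<lfloor>m1\<rfloor> + int i))}"
  have "nat (\<lfloor>m2\<rfloor> - \<lfloor>m1\<rfloor>) \<in> S"
  proof -
    have "good n q (of_int \<lfloor>m2\<rfloor>)" using m2 gfl by blast
    then have G: "good n q (of_int (max \<lfloor>m2\<rfloor> \<lfloor>m1\<rfloor>))" by (rule good_mono[OF assms(2)]) simp
    have eq: "\<lfloor>m1\<rfloor> + int (nat (\<lfloor>m2\<rfloor> - \<lfloor>m1\<rfloor>)) = max \<lfloor>m2\<rfloor> \<lfloor>m1\<rfloor>" by simp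
    show ?thesis unfolding S_def mem_Collect_eq eq by (rule G)
  qed
  then have LS: "(LEAST i. i \<in> S) \<in> S" by (rule LeastI)
  define K where "K = \<lfloor>m1\<rfloor> + int (LEAST i. i \<in> S)"
  have gK: "good n q m \<longleftrightarrow> of_int K \<le> m" for m
  proof
    assume g: "good n q m"
    have "\<lfloor>m\<rfloor> > \<lfloor>m1\<rfloor>"
    proof (rule ccontr)
      assume "\<not> \<lfloor>m1\<rfloor> < \<lfloor>m\<rfloor>"
      then have "of_int \<lfloor>m\<rfloor> \<le> m1" by (metis le_floor_iff not_less)
      moreover have "good n q (of_int \<lfloor>m\<rfloor>)" using g gfl by blast
      ultimately show False using m1 good_mono[OF assms(2)] by blast
    qed
    then have "nat (\<lfloor>m\<rfloor> - \<lfloor>m1\<rfloor>) \<in> S" using g gfl by (simp add: S_def)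
    then have "(LEAST i. i \<in> S) \<le> nat (\<lfloor>m\<rfloor> - \<lfloor>m1\<rfloor>)" by (rule Least_le)
    then have "K \<le> \<lfloor>m\<rfloor>" using \<open>\<lfloor>m\<rfloor> > \<lfloor>m1\<rfloor>\<close> by (simp add: K_def)
    then show "of_int K \<le> m" by (simp add: le_floor_iff)
  next
    assume "of_int K \<le> m"
    moreover have "good n q (of_int K)" using LS by (simp add: S_def K_def)
    ultimately show "good n q m" using good_mono[OF assms(2)] by blast
  qed
  show ?thesis by (intro exI[of _ "max M (of_int K)"]) (auto simp: gK)
qed

lemma Jt_char:
  assumes "q \<in> Zn n" "n \<ge> 1"
  shows "(M \<le> m \<and> good n q m) \<longleftrightarrow> Jt n M q \<le> m"
  using someI_ex[OF Jt_exists[OF assms, of M]] unfolding Jt_def by blast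

lemma Jt_ge: "q \<in> Zn n \<Longrightarrow> n \<ge> 1 \<Longrightarrow> M \<le> Jt n M q"
  using Jt_char[of q n M "Jt n M q"] by simp

lemma Jt_good: "q \<in> Zn n \<Longrightarrow> n \<ge> 1 \<Longrightarrow> good n q (Jt n M q)"
  using Jt_char[of q n M "Jt n M q"] by simp

lemma Jt_le: "q \<in> Zn n \<Longrightarrow> n \<ge> 1 \<Longrightarrow> M \<le> m \<Longrightarrow> good n q m \<Longrightarrow> Jt n M q \<le> m"
  using Jt_char[of q n M m] by simp

lemma Jt_eqI:
  assumes "q \<in> Zn n" "n \<ge> 1" "M \<le> m0" "good n q m0" "\<And>m. M \<le> m \<Longrightarrow> good n q m \<Longrightarrow> m0 \<le> m"
  shows "Jt n M q = m0"
  using assms Jt_le[OF assms(1,2)] Jt_ge[OF assms(1,2)] Jt_good[OF assms(1,2)]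
  by (meson order_antisym)

lemma Jt_neg: "Jt n M (- q) = Jt n M q"
  by (simp add: Jt_def good_neg)

lemma Jt_good_base: "q \<in> Zn n \<Longrightarrow> n \<ge> 1 \<Longrightarrow> good n q M \<Longrightarrow> Jt n M q = M"
  by (rule Jt_eqI) auto

lemma T_Zn: "p \<in> T n \<Longrightarrow> snd p \<in> Zn n" by (simp add: T_def)

lemma red_good: assumes "n \<ge> 1" shows "good n (red n h z - z) h"
proof -
  have N: "real n powi \<lfloor>h\<rfloor> \<noteq> 0" using assms by simp
  have "(red n h z - z) * real n powi \<lfloor>h\<rfloor> = frac (z * real n powi \<lfloor>h\<rfloor>) - z * real n powi \<lfloor>h\<rfloor>"
    using N by (simp add: red_def field_simps)
  also have "\<dots> = - of_int \<lfloor>z * real n powi \<lfloor>h\<rfloor>\<rfloor>" by (simp add: frac_def)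
  finally show ?thesis by (simp add: good_def)
qed

lemma red_cong: assumes "n \<ge> 1" "good n (z1 - z2) h" shows "red n h z1 = red n h z2"
proof -
  obtain k where k: "(z1 - z2) * real n powi \<lfloor>h\<rfloor> = of_int k" using assms by (auto simp: good_def elim: Ints_cases)
  then have "z1 * real n powi \<lfloor>h\<rfloor> = z2 * real n powi \<lfloor>h\<rfloor> + of_int k" by (simp add: algebra_simps)
  then show ?thesis by (simp add: red_def frac_add_of_int_right)
qed

lemma red_bounds: assumes "n \<ge> 1"
  shows "0 \<le> red n h z * real n powi \<lfloor>h\<rfloor>" "red n h z * real n powi \<lfloor>h\<rfloor> < 1"
  using assms by (simp_all add: red_def frac_lt_1)

lemma red_T: assumes "n \<ge> 1" "(h, r) \<in> T n" shows "red n h r = r"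
  using assms by (simp add: T_def red_def frac_eq)

lemma red_Zn: assumes "n \<ge> 1" "z \<in> Zn n" shows "red n h z \<in> Zn n"
proof -
  have N: "real n powi \<lfloor>h\<rfloor> \<noteq> 0" using assms by simp
  have "red n h z = z + real n powi (- \<lfloor>h\<rfloor>) * (- of_int \<lfloor>z * real n powi \<lfloor>h\<rfloor>\<rfloor>)"
    using N by (simp add: red_def frac_def field_simps power_int_minus)
  also have "\<dots> \<in> Zn n" by (intro Zn_add[OF assms(2)] Zn_mult_powi[OF Zn_Ints] assms(1)) simp
  finally show ?thesis .
qed

lemma br_T: assumes "n \<ge> 1" "s \<in> Zn n" shows "br n s u \<in> T n"
  using assms red_bounds[OF assms(1)] red_Zn[OF assms] by (simp add: br_def T_def)

lemma br_self: assumes "n \<ge> 1" "p \<in> T n" shows "br n (snd p) (fst p) = p"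
  using assms red_T[of n "fst p" "snd p"] by (cases p) (simp add: br_def)

lemma dT_T: "p \<in> T n \<Longrightarrow> q \<in> T n \<Longrightarrow> dT n p q = 2 * Jt n (max (fst p) (fst q)) (snd p - snd q) - fst p - fst q"
  by (simp add: dT_def)

lemma Jt_ult:
  assumes n: "n \<ge> 1" and T: "p \<in> T n" "q \<in> T n" "r \<in> T n"
  shows "Jt n (max (fst p) (fst q)) (snd p - snd q) \<le>
         max (Jt n (max (fst p) (fst r)) (snd p - snd r)) (Jt n (max (fst r) (fst q)) (snd r - snd q))"
proof -
  let ?J1 = "Jt n (max (fst p) (fst r)) (snd p - snd r)"
  let ?J2 = "Jt n (max (fst r) (fst q)) (snd r - snd q)"
  have Z: "snd p - snd r \<in> Zn n" "snd r - snd q \<in> Zn n" "snd p - snd q \<in> Zn n"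
    using T by (auto intro!: Zn_diff T_Zn)
  have g1: "good n (snd p - snd r) (max ?J1 ?J2)"
    by (rule good_mono[OF n Jt_good[OF Z(1) n, of "max (fst p) (fst r)"]]) simp
  have g2: "good n (snd r - snd q) (max ?J1 ?J2)"
    by (rule good_mono[OF n Jt_good[OF Z(2) n, of "max (fst r) (fst q)"]]) simp
  have "good n (snd p - snd q) (max ?J1 ?J2)"
    using good_add[OF g1 g2] by simp
  moreover have "max (fst p) (fst q) \<le> max ?J1 ?J2"
    using Jt_ge[OF Z(1) n, of "max (fst p) (fst r)"] Jt_ge[OF Z(2) n, of "max (fst r) (fst q)"] by auto
  ultimately show ?thesis by (intro Jt_le[OF Z(3) n])
qed

lemma metric_T: assumes n: "n \<ge> 1" shows "Metric_space (T n) (dT n)"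
proof
  fix x y show "0 \<le> dT n x y"
  proof (cases "x \<in> T n \<and> y \<in> T n")
    case True
    then have "max (fst x) (fst y) \<le> Jt n (max (fst x) (fst y)) (snd x - snd y)"
      by (intro Jt_ge[OF _ n] Zn_diff T_Zn) auto
    then show ?thesis using True by (simp add: dT_def)
  qed (auto simp: dT_def)
next
  fix x y show "dT n x y = dT n y x"
    using Jt_neg[of n _ "snd x - snd y"] by (simp add: dT_def max.commute)
next
  fix x y assume T: "x \<in> T n" "y \<in> T n"
  have Z: "snd x - snd y \<in> Zn n" using T by (auto intro!: Zn_diff T_Zn)
  show "dT n x y = 0 \<longleftrightarrow> x = y"
  proof
    assume "dT n x y = 0"
    then have J: "2 * Jt n (max (fst x) (fst y)) (snd x - snd y) = fst x + fst y" using T by (simp add: dT_def)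
    have "max (fst x) (fst y) \<le> Jt n (max (fst x) (fst y)) (snd x - snd y)" by (rule Jt_ge[OF Z n])
    moreover have "fst x \<le> max (fst x) (fst y)" "fst y \<le> max (fst x) (fst y)" by simp_all
    ultimately have h: "fst x = fst y" "Jt n (max (fst x) (fst y)) (snd x - snd y) = fst x" using J by linarith+
    have "good n (snd x - snd y) (fst x)" using Jt_good[OF Z n, of "max (fst x) (fst y)"] h by simp
    then have "(snd x - snd y) * real n powi \<lfloor>fst x\<rfloor> \<in> \<int>" by (simp add: good_def)
    moreover have "0 \<le> snd x * real n powi \<lfloor>fst x\<rfloor>" "snd x * real n powi \<lfloor>fst x\<rfloor> < 1"
      "0 \<le> snd y * real n powi \<lfloor>fst x\<rfloor>" "snd y * real n powi \<lfloor>fst x\<rfloor> < 1"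
      using T h by (auto simp: T_def)
    ultimately have "(snd x - snd y) * real n powi \<lfloor>fst x\<rfloor> = 0"
      by (intro Ints_nonzero_abs_less1) (auto simp: algebra_simps)
    then have "snd x = snd y" using n by simp
    then show "x = y" using h by (simp add: prod_eq_iff)
  next
    assume "x = y"
    then show "dT n x y = 0" using T n Jt_good_base[of 0 n "fst x"] by (simp add: dT_def good_0 Zn_Ints)
  qed
next
  fix x y z assume T: "x \<in> T n" "y \<in> T n" "z \<in> T n"
  have U: "Jt n (max (fst x) (fst z)) (snd x - snd z) \<le>
         max (Jt n (max (fst x) (fst y)) (snd x - snd y)) (Jt n (max (fst y) (fst z)) (snd y - snd z))"
    by (rule Jt_ult[OF n T(1) T(3) T(2)])
  have "max (fst x) (fst y) \<le> Jt n (max (fst x) (fst y)) (snd x - snd y)"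
    by (rule Jt_ge[OF Zn_diff[OF T_Zn[OF T(1)] T_Zn[OF T(2)]] n])
  moreover have "max (fst y) (fst z) \<le> Jt n (max (fst y) (fst z)) (snd y - snd z)"
    by (rule Jt_ge[OF Zn_diff[OF T_Zn[OF T(2)] T_Zn[OF T(3)]] n])
  ultimately show "dT n x z \<le> dT n x y + dT n y z" using T U by (simp add: dT_def max_def split: if_splits)
qed

lemma hyp_T: assumes n: "n \<ge> 1" shows "gromov_hyperbolic (T n) (dT n)"
proof (rule gromov_from_A[where A = "\<lambda>p q. Jt n (max (fst p) (fst q)) (snd p - snd q)" and h = fst and e = 0 and c = 0])
  fix p q assume "p \<in> T n" "q \<in> T n"
  show "Jt n (max (fst p) (fst q)) (snd p - snd q) = Jt n (max (fst q) (fst p)) (snd q - snd p)"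
    using Jt_neg[of n _ "snd p - snd q"] by (simp add: max.commute)
  show "\<bar>dT n p q - (2 * Jt n (max (fst p) (fst q)) (snd p - snd q) - fst p - fst q)\<bar> \<le> 0"
    using \<open>p \<in> T n\<close> \<open>q \<in> T n\<close> by (simp add: dT_def)
next
  fix p q r assume "p \<in> T n" "q \<in> T n" "r \<in> T n"
  then show "Jt n (max (fst p) (fst q)) (snd p - snd q) \<le>
         max (Jt n (max (fst p) (fst r)) (snd p - snd r)) (Jt n (max (fst r) (fst q)) (snd r - snd q)) + 0"
    using Jt_ult[OF n] by simp
qed simp


lemma dT_br:
  assumes n: "n \<ge> 1" and s: "s \<in> Zn n"
  shows "dT n (br n s u) (br n s v) = \<bar>u - v\<bar>"
proof -
  have Z: "red n u s - red n v s \<in> Zn n" using n s by (intro Zn_diff red_Zn)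
  have g1: "good n (red n u s - s) (max u v)" by (rule good_mono[OF n red_good[OF n]]) simp
  have g2: "good n (red n v s - s) (max u v)" by (rule good_mono[OF n red_good[OF n]]) simp
  have "good n (red n u s - red n v s) (max u v)" using good_diff[OF g1 g2] by simp
  then have "Jt n (max u v) (red n u s - red n v s) = max u v" by (rule Jt_good_base[OF Z n])
  then show ?thesis using br_T[OF n s] by (simp add: dT_def br_def max_def)
qed

lemma br_eq: assumes "n \<ge> 1" "good n (s - s') u" shows "br n s u = br n s' u"
  using red_cong[OF assms] by (simp add: br_def)

lemma geo_T: assumes n: "n \<ge> 1" shows "geodesic_metric (T n) (dT n)"
  unfolding geodesic_metric_def
proof (intro ballI)
  fix x y assume x: "x \<in> T n" and y: "y \<in> T n"
  obtain hx rx where xe: "x = (hx, rx)" by (cases x)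
  obtain hy ry where ye: "y = (hy, ry)" by (cases y)
  have rx: "rx \<in> Zn n" and ry: "ry \<in> Zn n" using x y xe ye T_Zn by fastforce+
  have Z: "rx - ry \<in> Zn n" using rx ry by (rule Zn_diff)
  define m where "m = Jt n (max hx hy) (rx - ry)"
  have mge: "max hx hy \<le> m" unfolding m_def by (rule Jt_ge[OF Z n])
  have mg: "good n (rx - ry) m" unfolding m_def by (rule Jt_good[OF Z n])
  define L where "L = dT n x y"
  have L: "L = 2 * m - hx - hy" using x y by (simp add: L_def dT_def xe ye m_def)
  define s1 where "s1 = m - hx"
  have s1: "0 \<le> s1" "s1 \<le> L" using mge by (auto simp: s1_def L)
  define \<gamma> where "\<gamma> = (\<lambda>s. if s \<le> s1 then br n rx (hx + s) else br n ry (2 * m - hx - s))"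
  have brm: "br n rx m = br n ry m" using br_eq[OF n mg] .
  have g2: "\<gamma> s = br n ry (2 * m - hx - s)" if "s \<in> {s1..L}" for s
    using that brm by (auto simp: \<gamma>_def s1_def)
  have g1: "\<gamma> s = br n rx (hx + s)" if "s \<in> {0..s1}" for s
    using that by (auto simp: \<gamma>_def)
  have M: "Metric_space (T n) (dT n)" by (rule metric_T[OF n])
  have img: "\<gamma> ` {0..L} \<subseteq> T n"
    using br_T[OF n rx] br_T[OF n ry] by (auto simp: \<gamma>_def)
  have g0: "\<gamma> 0 = x" using g1[of 0] s1 br_self[OF n x] by (simp add: xe)
  have gL: "\<gamma> L = y"
  proof -
    have "\<gamma> L = br n ry (2 * m - hx - L)" using g2[of L] s1 by simp
    also have "\<dots> = y" using br_self[OF n y] by (simp add: L ye)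
    finally show ?thesis .
  qed
  have lip: "dT n (\<gamma> s) (\<gamma> u) \<le> \<bar>s - u\<bar>" if "s \<in> {0..L}" "u \<in> {0..L}" for s u
  proof (rule lip_concat[OF M s1(1) s1(2) img _ _ that])
    fix s u assume "s \<in> {0..s1}" "u \<in> {0..s1}"
    then show "dT n (\<gamma> s) (\<gamma> u) \<le> \<bar>s - u\<bar>" using g1 dT_br[OF n rx] by simp
  next
    fix s u assume "s \<in> {s1..L}" "u \<in> {s1..L}"
    then show "dT n (\<gamma> s) (\<gamma> u) \<le> \<bar>s - u\<bar>" using g2 dT_br[OF n ry] by (simp add: abs_minus_commute)
  qed
  show "\<exists>\<gamma>. \<gamma> 0 = x \<and> \<gamma> (dT n x y) = y \<and> \<gamma> ` {0..dT n x y} \<subseteq> T n \<and>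
        (\<forall>s\<in>{0..dT n x y}. \<forall>u\<in>{0..dT n x y}. dT n (\<gamma> s) (\<gamma> u) = \<bar>s - u\<bar>)"
    using geodesic_from_lip[OF M x y g0 gL[unfolded L_def] img[unfolded L_def] lip[unfolded L_def]]
      g0 gL img unfolding L_def by blast
qed



lemma of_rat_powi: "(of_rat (of_nat n powi k) :: real) = real n powi k"
  by (simp add: power_int_def of_rat_power of_rat_inverse)

lemma group_action_from:
  fixes G (structure) and E :: "'b set" and \<phi> :: "'a \<Rightarrow> 'b \<Rightarrow> 'b"
  assumes G: "group G"
    and cl: "\<And>g x. g \<in> carrier G \<Longrightarrow> x \<in> E \<Longrightarrow> \<phi> g x \<in> E"
    and ext: "\<And>g. g \<in> carrier G \<Longrightarrow> \<phi> g \<in> extensional E"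
    and mult: "\<And>g h x. g \<in> carrier G \<Longrightarrow> h \<in> carrier G \<Longrightarrow> x \<in> E \<Longrightarrow> \<phi> (g \<otimes> h) x = \<phi> g (\<phi> h x)"
    and one: "\<And>x. x \<in> E \<Longrightarrow> \<phi> \<one> x = x"
  shows "group_action G E \<phi>"
proof -
  interpret group G by (rule G)
  have Bij: "\<phi> g \<in> Bij E" if g: "g \<in> carrier G" for g
  proof -
    have "bij_betw (\<phi> g) E E"
    proof (rule bij_betw_byWitness[where f' = "\<phi> (inv g)"])
      show "\<forall>a\<in>E. \<phi> (inv g) (\<phi> g a) = a" using g mult[of "inv g" g] one by simp
      show "\<forall>a\<in>E. \<phi> g (\<phi> (inv g) a) = a" using g mult[of g "inv g"] one by simp
      show "\<phi> g ` E \<subseteq> E" using cl g by auto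
      show "\<phi> (inv g) ` E \<subseteq> E" using cl g by auto
    qed
    then show ?thesis using ext[OF g] by (simp add: Bij_def)
  qed
  show ?thesis
    unfolding group_action_def group_hom_def group_hom_axioms_def
  proof (intro conjI)
    show "group G" by (rule G)
    show "group (BijGroup E)" by (rule group_BijGroup)
    show "\<phi> \<in> hom G (BijGroup E)"
    proof (rule homI)
      fix g assume "g \<in> carrier G"
      then show "\<phi> g \<in> carrier (BijGroup E)" using Bij by (simp add: BijGroup_def)
    next
      fix g h assume g: "g \<in> carrier G" and h: "h \<in> carrier G"
      have "\<phi> (g \<otimes> h) = compose E (\<phi> g) (\<phi> h)"
      proof (rule extensionalityI[where A = E])
        show "\<phi> (g \<otimes> h) \<in> extensional E" using ext g h by simp
        show "compose E (\<phi> g) (\<phi> h) \<in> extensional E" by (simp add: compose_def)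
        fix x assume "x \<in> E"
        then show "\<phi> (g \<otimes> h) x = compose E (\<phi> g) (\<phi> h) x" using mult g h by (simp add: compose_def)
      qed
      then show "\<phi> (g \<otimes> h) = \<phi> g \<otimes>\<^bsub>BijGroup E\<^esub> \<phi> h"
        using Bij[OF g] Bij[OF h] by (simp add: BijGroup_def)
    qed
  qed
qed

definition phiT :: "nat \<Rightarrow> int \<times> rat \<Rightarrow> real \<times> real \<Rightarrow> real \<times> real" where
  "phiT n g p = (if p \<in> T n then (fst p - of_int (fst g),
      red n (fst p - of_int (fst g)) (of_rat (snd g) + real n powi (fst g) * snd p)) else undefined)"

lemma phiT_T:
  assumes n: "n \<ge> 1" and g: "g \<in> carrier (BS1 n)" and p: "p \<in> T n"
  shows "phiT n g p \<in> T n"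
proof -
  have "of_rat (snd g) + real n powi (fst g) * snd p \<in> Zn n"
    using g p n by (intro Zn_add n_adic_Zn Zn_mult_powi T_Zn) (auto simp: BS1_carrier mem_Times_iff)
  then show ?thesis using p br_T[OF n] by (simp add: phiT_def br_def)
qed

lemma phiT_mult:
  assumes n: "n \<ge> 1" and g: "g \<in> carrier (BS1 n)" and g': "g' \<in> carrier (BS1 n)" and p: "p \<in> T n"
  shows "phiT n (g \<otimes>\<^bsub>BS1 n\<^esub> g') p = phiT n g (phiT n g' p)"
proof -
  obtain k b where gk: "g = (k, b)" by (cases g)
  obtain k' b' where gk': "g' = (k', b')" by (cases g')
  obtain h r where pe: "p = (h, r)" by (cases p)
  have pT: "phiT n g' p \<in> T n" by (rule phiT_T[OF n g' p])
  define z where "z = of_rat b' + real n powi k' * r"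
  have N: "real n \<noteq> 0" using n by simp
  have e1: "of_rat (b + of_nat n powi k * b') + real n powi (k + k') * r
        = of_rat b + real n powi k * z"
    using N by (simp add: z_def of_rat_add of_rat_mult of_rat_powi power_int_add algebra_simps)
  have gd: "good n (real n powi k * (red n (h - of_int k') z - z)) (h - of_int k' - of_int k)"
    using red_good[OF n, of "h - of_int k'" z] by (simp add: good_shift[OF n])
  have eqh: "h - of_int (k + k') = h - of_int k' - of_int k" by simp
  have dd: "(of_rat b + real n powi k * red n (h - of_int k') z) - (of_rat b + real n powi k * z)
      = real n powi k * (red n (h - of_int k') z - z)" by (simp add: algebra_simps)
  have "red n (h - of_int k' - of_int k) (of_rat b + real n powi k * red n (h - of_int k') z)
      = red n (h - of_int k' - of_int k) (of_rat b + real n powi k * z)"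
    by (rule red_cong[OF n]) (unfold dd, rule gd)
  then have "red n (h - of_int (k + k')) (of_rat b + real n powi k * z)
      = red n (h - of_int k' - of_int k) (of_rat b + real n powi k * red n (h - of_int k') z)"
    unfolding eqh by simp
  then show ?thesis using p pT
    by (simp add: phiT_def gk gk' pe BS1_mult e1 z_def)
qed

lemma phiT_one:
  assumes n: "n \<ge> 1" and p: "p \<in> T n" shows "phiT n \<one>\<^bsub>BS1 n\<^esub> p = p"
  using p red_T[OF n, of "fst p" "snd p"] by (cases p) (simp add: phiT_def BS1_one)

lemma phiT_iso:
  assumes n: "n \<ge> 1" and g: "g \<in> carrier (BS1 n)" and p: "p \<in> T n" and q: "q \<in> T n"
  shows "dT n (phiT n g p) (phiT n g q) = dT n p q"
proof -
  obtain k b where gk: "g = (k, b)" by (cases g)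
  obtain hp rp where pe: "p = (hp, rp)" by (cases p)
  obtain hq rq where qe: "q = (hq, rq)" by (cases q)
  have bZ: "of_rat b \<in> Zn n" using g gk by (auto simp: BS1_carrier intro: n_adic_Zn)
  have rZ: "rp \<in> Zn n" "rq \<in> Zn n" using p q pe qe T_Zn by fastforce+
  define zp where "zp = of_rat b + real n powi k * rp"
  define zq where "zq = of_rat b + real n powi k * rq"
  have zZ: "zp \<in> Zn n" "zq \<in> Zn n" unfolding zp_def zq_def using bZ rZ n by (auto intro!: Zn_add Zn_mult_powi)
  define sp where "sp = red n (hp - of_int k) zp"
  define sq where "sq = red n (hq - of_int k) zq"
  have sZ: "sp - sq \<in> Zn n" unfolding sp_def sq_def using zZ n by (intro Zn_diff red_Zn)
  have rdZ: "rp - rq \<in> Zn n" using rZ by (rule Zn_diff)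
  define H where "H = max hp hq"
  define J where "J = Jt n H (rp - rq)"
  have decomp: "sp - sq = (sp - zp) - (sq - zq) + real n powi k * (rp - rq)"
    by (simp add: zp_def zq_def algebra_simps)
  have gp: "good n (sp - zp) m" if "hp - of_int k \<le> m" for m
    using good_mono[OF n red_good[OF n] that] by (simp add: sp_def)
  have gq: "good n (sq - zq) m" if "hq - of_int k \<le> m" for m
    using good_mono[OF n red_good[OF n] that] by (simp add: sq_def)
  have "Jt n (H - of_int k) (sp - sq) = J - of_int k"
  proof (rule Jt_eqI[OF sZ n])
    show "H - of_int k \<le> J - of_int k" using Jt_ge[OF rdZ n] by (simp add: J_def)
    have "good n (real n powi k * (rp - rq)) (J - of_int k)"
      using Jt_good[OF rdZ n, of H] by (simp add: good_shift[OF n] J_def)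
    moreover have "hp - of_int k \<le> J - of_int k" "hq - of_int k \<le> J - of_int k"
      using Jt_ge[OF rdZ n, of H] by (auto simp: J_def H_def)
    ultimately show "good n (sp - sq) (J - of_int k)"
      unfolding decomp by (intro good_add good_diff gp gq)
  next
    fix m assume m: "H - of_int k \<le> m" and gm: "good n (sp - sq) m"
    have m': "hp - of_int k \<le> m" "hq - of_int k \<le> m" using m by (auto simp: H_def)
    have "real n powi k * (rp - rq) = (sp - sq) - (sp - zp) + (sq - zq)" by (simp add: decomp)
    then have "good n (real n powi k * (rp - rq)) m"
      using good_add[OF good_diff[OF gm gp[OF m'(1)]] gq[OF m'(2)]] by simp
    then have "good n (rp - rq) (m + of_int k)" by (simp add: good_shift[OF n])
    then have "J \<le> m + of_int k" unfolding J_def using Jt_le[OF rdZ n, of H "m + of_int k"] m by simp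
    then show "J - of_int k \<le> m" by simp
  qed
  moreover have "max (hp - of_int k) (hq - of_int k) = H - of_int k" by (simp add: H_def)
  moreover have "phiT n g p = (hp - of_int k, sp)" "phiT n g q = (hq - of_int k, sq)"
    using p q by (simp_all add: phiT_def gk pe qe sp_def sq_def zp_def zq_def)
  ultimately show ?thesis using phiT_T[OF n g p] phiT_T[OF n g q] p q
    by (simp add: dT_def pe qe J_def H_def)
qed

lemma isom_T: assumes n: "n \<ge> 1" shows "isometric_action (BS1 n) (T n) (dT n) (phiT n)"
  unfolding isometric_action_def
proof (intro conjI ballI)
  show "group_action (BS1 n) (T n) (phiT n)"
  proof (rule group_action_from[OF group_BS1[OF n]])
    show "phiT n g x \<in> T n" if "g \<in> carrier (BS1 n)" "x \<in> T n" for g x using phiT_T[OF n that] .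
    show "phiT n g \<in> extensional (T n)" for g by (simp add: phiT_def extensional_def)
    show "phiT n (g \<otimes>\<^bsub>BS1 n\<^esub> h) x = phiT n g (phiT n h x)"
      if "g \<in> carrier (BS1 n)" "h \<in> carrier (BS1 n)" "x \<in> T n" for g h x using phiT_mult[OF n that] .
    show "phiT n \<one>\<^bsub>BS1 n\<^esub> x = x" if "x \<in> T n" for x using phiT_one[OF n that] .
  qed
  fix g x y assume "g \<in> carrier (BS1 n)" "x \<in> T n" "y \<in> T n"
  then show "dT n (phiT n g x) (phiT n g y) = dT n x y" by (rule phiT_iso[OF n])
qed


lemma dT_height: assumes n: "n \<ge> 1" and p: "p \<in> T n" and q: "q \<in> T n"
  shows "\<bar>fst p - fst q\<bar> \<le> dT n p q"
proof -
  have "max (fst p) (fst q) \<le> Jt n (max (fst p) (fst q)) (snd p - snd q)"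
    by (rule Jt_ge[OF Zn_diff[OF T_Zn[OF p] T_Zn[OF q]] n])
  then show ?thesis using p q by (simp add: dT_def max_def abs_if split: if_splits)
qed

lemma cont_br: assumes n: "n \<ge> 1" and s: "s \<in> Zn n"
  shows "continuous_map euclidean (Metric_space.mtopology (T n) (dT n)) (br n s)"
proof (rule cont_to_mtop[OF metric_T[OF n]])
  show "br n s x \<in> T n" for x by (rule br_T[OF n s])
  fix x :: real and e :: real assume "e > 0"
  then show "\<exists>\<delta>>0. \<forall>y. dist y x < \<delta> \<longrightarrow> dT n (br n s x) (br n s y) < e"
    by (intro exI[of _ e]) (auto simp: dT_br[OF n s] dist_real_def abs_minus_commute)
qed

lemma proper_T: assumes n: "n \<ge> 1" shows "proper_metric (T n) (dT n)"
  unfolding proper_metric_def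
proof (intro ballI allI)
  interpret Metric_space "T n" "dT n" by (rule metric_T[OF n])
  fix p \<rho> assume p: "p \<in> T n"
  obtain h r0 where pe: "p = (h, r0)" by (cases p)
  have r0: "r0 \<in> Zn n" using p pe T_Zn by fastforce
  define N where "N = \<lfloor>h + \<rho>\<rfloor>"
  define N1 where "N1 = \<lfloor>h - \<rho>\<rfloor>"
  define F where "F = {s \<in> Zn n. (r0 - s) * real n powi N \<in> \<int> \<and> 0 \<le> s \<and> s \<le> real n powi (- N1)}"
  define I where "I = (\<lambda>s. {h - \<rho>..h + \<rho>} \<inter> {u. dT n p (br n s u) \<le> \<rho>})"
  have Npos: "real n powi k > 0" for k using n by simp
  have ball: "mcball p \<rho> = \<Union> ((\<lambda>s. br n s ` I s) ` F)"
  proof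
    show "mcball p \<rho> \<subseteq> \<Union> ((\<lambda>s. br n s ` I s) ` F)"
    proof
      fix q assume "q \<in> mcball p \<rho>"
      then have q: "q \<in> T n" and dq: "dT n p q \<le> \<rho>" by (auto simp: mcball_def)
      obtain u s where qe: "q = (u, s)" by (cases q)
      have s: "s \<in> Zn n" using q qe T_Zn by fastforce
      have hu: "\<bar>h - u\<bar> \<le> \<rho>" using dT_height[OF n p q] dq by (simp add: pe qe)
      define J where "J = Jt n (max h u) (r0 - s)"
      have Z: "r0 - s \<in> Zn n" using r0 s by (rule Zn_diff)
      have Jge: "max h u \<le> J" unfolding J_def by (rule Jt_ge[OF Z n])
      have dJ: "dT n p q = 2 * J - h - u" using p q by (simp add: dT_def pe qe J_def)
      have "J \<le> h + \<rho>" using dJ dq hu by linarith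
      then have "good n (r0 - s) (h + \<rho>)" using good_mono[OF n Jt_good[OF Z n]] unfolding J_def by blast
      then have g: "(r0 - s) * real n powi N \<in> \<int>" by (simp add: good_def N_def)
      have sb: "0 \<le> s * real n powi \<lfloor>u\<rfloor>" "s * real n powi \<lfloor>u\<rfloor> < 1" using q qe by (auto simp: T_def)
      have s0: "0 \<le> s" using sb(1) Npos[of "\<lfloor>u\<rfloor>"] by (simp add: zero_le_mult_iff)
      have "s < real n powi (- \<lfloor>u\<rfloor>)" using sb(2) Npos[of "\<lfloor>u\<rfloor>"]
        by (simp add: power_int_minus field_simps)
      also have "\<dots> \<le> real n powi (- N1)"
        by (rule power_int_increasing) (use hu n in \<open>auto simp: N1_def intro!: floor_mono\<close>)
      finally have "s \<in> F" using s s0 g by (simp add: F_def)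
      moreover have "u \<in> I s" using hu dq br_self[OF n q] by (auto simp: I_def qe)
      moreover have "q = br n s u" using br_self[OF n q] by (simp add: qe)
      ultimately show "q \<in> \<Union> ((\<lambda>s. br n s ` I s) ` F)" by blast
    qed
  next
    show "\<Union> ((\<lambda>s. br n s ` I s) ` F) \<subseteq> mcball p \<rho>"
      using p br_T[OF n] by (auto simp: mcball_def F_def I_def)
  qed
  have finF: "finite F"
  proof -
    define C where "C = \<lceil>(\<bar>r0\<bar> + real n powi (- N1)) * real n powi N\<rceil>"
    have "F \<subseteq> (\<lambda>z. r0 - of_int z / real n powi N) ` {-C..C}"
    proof
      fix s assume sF: "s \<in> F"
      then obtain z where z: "(r0 - s) * real n powi N = of_int z" by (auto simp: F_def elim: Ints_cases)
      have "of_int z / real n powi N = r0 - s" using Npos[of N] n by (simp add: z[symmetric])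
      then have "s = r0 - of_int z / real n powi N" by simp
      moreover have "\<bar>of_int z\<bar> \<le> (\<bar>r0\<bar> + real n powi (- N1)) * real n powi N"
      proof -
        have "\<bar>r0 - s\<bar> \<le> \<bar>r0\<bar> + real n powi (- N1)" using sF by (auto simp: F_def)
        then have "\<bar>r0 - s\<bar> * real n powi N \<le> (\<bar>r0\<bar> + real n powi (- N1)) * real n powi N"
          using Npos[of N] by (intro mult_right_mono) auto
        then show ?thesis using z[symmetric] Npos[of N] by (simp add: abs_mult)
      qed
      then have c1: "of_int z \<le> (\<bar>r0\<bar> + real n powi (- N1)) * real n powi N"
        and c2: "of_int (- z) \<le> (\<bar>r0\<bar> + real n powi (- N1)) * real n powi N" by (auto simp: abs_le_iff)
      have zc1: "z \<le> C" using ceiling_mono[OF c1] by (simp add: C_def)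
      have "- z \<le> C" using ceiling_mono[OF c2] unfolding C_def of_int_minus[symmetric] ceiling_of_int .
      then have "z \<in> {-C..C}" using zc1 by simp
      ultimately show "s \<in> (\<lambda>z. r0 - of_int z / real n powi N) ` {-C..C}" by blast
    qed
    then show ?thesis by (rule finite_subset) simp
  qed
  have cpt: "compactin mtopology (br n s ` I s)" if sF: "s \<in> F" for s
  proof -
    have s: "s \<in> Zn n" using sF by (simp add: F_def)
    define f where "f = (\<lambda>u. dT n p (br n s u))"
    have lip: "1-lipschitz_on UNIV f"
      unfolding lipschitz_on_def
    proof (intro conjI ballI)
      fix u v :: real
      have "f u \<le> f v + dT n (br n s v) (br n s u)"
        unfolding f_def using p br_T[OF n s] by (intro triangle) auto
      moreover have "f v \<le> f u + dT n (br n s u) (br n s v)"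
        unfolding f_def using p br_T[OF n s] by (intro triangle) auto
      ultimately show "dist (f u) (f v) \<le> 1 * dist u v"
        by (simp add: dT_br[OF n s] dist_real_def abs_minus_commute abs_le_iff)
    qed simp
    have "closed {u. f u \<le> \<rho>}"
      by (rule closed_Collect_le[OF lipschitz_on_continuous_on[OF lip]]) simp
    then have "compact (I s)" unfolding I_def f_def by (intro compact_Int_closed) auto
    then show ?thesis using image_compactin cont_br[OF n s] by (metis compactin_euclidean_iff)
  qed
  show "compactin mtopology (mcball p \<rho>)"
    unfolding ball using finF cpt by (intro compactin_Union) auto
qed

lemma unbounded_T: assumes n: "n \<ge> 1" shows "unbounded_metric (T n) (dT n)"
  unfolding unbounded_metric_def
proof (intro conjI ballI allI)
  fix x B assume x: "x \<in> T n"
  have s: "snd x \<in> Zn n" using x by (rule T_Zn)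
  have "dT n x (br n (snd x) (fst x + \<bar>B\<bar> + 1)) = \<bar>B\<bar> + 1"
    using dT_br[OF n s, of "fst x" "fst x + \<bar>B\<bar> + 1"] br_self[OF n x] by simp
  then show "\<exists>y\<in>T n. B < dT n x y" using br_T[OF n s] by (intro bexI[of _ "br n (snd x) (fst x + \<bar>B\<bar> + 1)"]) auto
next
  show "T n \<noteq> {}" using br_T[OF n Zn_Ints[of 0]] by auto
qed

lemma cocompact_T: assumes n: "n \<ge> 1" shows "cocompact_action (BS1 n) (T n) (dT n) (phiT n)"
  unfolding cocompact_action_def
proof (intro exI conjI)
  let ?K = "br n 0 ` {0..1}"
  show "compactin (Metric_space.mtopology (T n) (dT n)) ?K"
    by (rule image_compactin[OF _ cont_br[OF n Zn_Ints]]) auto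
  show "(\<Union>g\<in>carrier (BS1 n). phiT n g ` ?K) = T n"
  proof
    show "(\<Union>g\<in>carrier (BS1 n). phiT n g ` ?K) \<subseteq> T n"
      by (auto intro!: phiT_T[OF n] br_T[OF n] Zn_Ints)
  next
    show "T n \<subseteq> (\<Union>g\<in>carrier (BS1 n). phiT n g ` ?K)"
    proof
      fix p assume p: "p \<in> T n"
      obtain h r where pe: "p = (h, r)" by (cases p)
      have r: "r \<in> Zn n" using p pe T_Zn by fastforce
      obtain b where b: "b \<in> n_adic n" "of_rat b = r" using Zn_n_adic[OF r n] by blast
      define k where "k = - \<lfloor>h\<rfloor>"
      define u where "u = h - of_int \<lfloor>h\<rfloor>"
      have u: "u \<in> {0..1}" using frac_lt_1[of h] by (auto simp: u_def frac_def)
      have br0: "br n 0 u = (u, 0)" by (simp add: br_def red_def)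
      have "br n 0 u \<in> T n" by (rule br_T[OF n Zn_Ints]) simp
      then have "(u, 0) \<in> T n" by (simp only: br0)
      have uk: "u - of_int k = h" by (simp add: u_def k_def)
      have "phiT n (k, b) (br n 0 u) = phiT n (k, b) (u, 0)" by (simp only: br0)
      also have "\<dots> = (u - of_int k, red n (u - of_int k) (of_rat b + real n powi k * 0))"
        using \<open>(u, 0) \<in> T n\<close> by (simp add: phiT_def)
      also have "\<dots> = (h, red n h r)" using uk b by simp
      finally have "phiT n (k, b) (br n 0 u) = (h, red n h r)" .
      also have "\<dots> = p" using red_T[OF n] p by (simp add: pe)
      finally have "p = phiT n (k, b) (br n 0 u)" ..
      then have "p \<in> phiT n (k, b) ` ?K" using u by blast
      moreover have "(k, b) \<in> carrier (BS1 n)" using b by (simp add: BS1_carrier)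
      ultimately show "p \<in> (\<Union>g\<in>carrier (BS1 n). phiT n g ` ?K)" by blast
    qed
  qed
qed


definition dH :: "real \<times> real \<Rightarrow> real \<times> real \<Rightarrow> real" where
  "dH p q = (if \<bar>fst p - fst q\<bar> \<le> 2 * exp (max (snd p) (snd q))
     then 2 * max (snd p) (snd q) - snd p - snd q + \<bar>fst p - fst q\<bar> * exp (- max (snd p) (snd q))
     else 2 * ln (\<bar>fst p - fst q\<bar> / 2) + 2 - snd p - snd q)"

lemma V_le:
  fixes M D m :: real
  assumes D: "0 \<le> D" and m: "M \<le> m"
  shows "(if D \<le> 2 * exp M then 2 * M + D * exp (- M) else 2 * ln (D / 2) + 2) \<le> 2 * m + D * exp (- m)"
proof (cases "D \<le> 2 * exp M")
  case True
  define t where "t = m - M"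
  have t0: "0 \<le> t" using m by (simp add: t_def)
  have e1: "exp (- m) = exp (- M) * exp (- t)" by (simp add: t_def flip: exp_add)
  have c0: "0 \<le> 1 - exp (- t)" using t0 by simp
  have ct: "1 - exp (- t) \<le> t" using exp_ge_add_one_self[of "- t"] by simp
  have a0: "0 \<le> D * exp (- M)" using D by simp
  have a2: "D * exp (- M) \<le> 2"
  proof -
    have "D * exp (- M) \<le> 2 * exp M * exp (- M)" using True by (intro mult_right_mono) auto
    also have "\<dots> = 2" by (simp add: exp_minus)
    finally show ?thesis .
  qed
  have "D * exp (- M) * (1 - exp (- t)) \<le> 2 * t"
    by (rule mult_mono[OF a2 ct]) (use c0 in auto)
  then have "D * exp (- M) - D * exp (- m) \<le> 2 * t" by (simp add: e1 algebra_simps)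
  then show ?thesis using True by (simp add: t_def)
next
  case False
  then have Dp: "D / 2 > 0" using exp_gt_zero[of M] by linarith
  define L where "L = ln (D / 2)"
  have eL: "exp L = D / 2" using Dp by (simp add: L_def)
  define u where "u = m - L"
  have "D * exp (- m) = D * exp (- L) * exp (- u)" by (simp add: u_def flip: exp_add)
  also have "D * exp (- L) = 2" using eL Dp by (simp add: exp_minus field_simps)
  finally have "D * exp (- m) = 2 * exp (- u)" .
  moreover have "1 - u \<le> exp (- u)" using exp_ge_add_one_self[of "- u"] by simp
  ultimately show ?thesis using False by (simp add: u_def L_def)
qed

lemma V_opt:
  fixes M D :: real
  assumes D: "0 \<le> D"
  shows "\<exists>m0\<ge>M. (if D \<le> 2 * exp M then 2 * M + D * exp (- M) else 2 * ln (D / 2) + 2) = 2 * m0 + D * exp (- m0)"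
proof (cases "D \<le> 2 * exp M")
  case True
  then show ?thesis by (intro exI[of _ M]) simp
next
  case False
  then have Dp: "D / 2 > 0" using exp_gt_zero[of M] by linarith
  have eL: "exp (ln (D / 2)) = D / 2" using Dp by simp
  have "M \<le> ln (D / 2)" using False Dp by (simp add: ln_ge_iff)
  moreover have "D * exp (- ln (D / 2)) = 2" using eL Dp by (simp add: exp_minus field_simps)
  ultimately show ?thesis using False by (intro exI[of _ "ln (D / 2)"]) simp
qed

lemma dH_V: "dH p q = (if \<bar>fst p - fst q\<bar> \<le> 2 * exp (max (snd p) (snd q))
    then 2 * max (snd p) (snd q) + \<bar>fst p - fst q\<bar> * exp (- max (snd p) (snd q))
    else 2 * ln (\<bar>fst p - fst q\<bar> / 2) + 2) - snd p - snd q"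
  by (simp add: dH_def)

lemma dH_le: assumes "max (snd p) (snd q) \<le> m"
  shows "dH p q \<le> 2 * m - snd p - snd q + \<bar>fst p - fst q\<bar> * exp (- m)"
  using V_le[OF abs_ge_zero assms, of "fst p - fst q"] unfolding dH_V by linarith

lemma dH_opt: "\<exists>m0\<ge>max (snd p) (snd q). dH p q = 2 * m0 - snd p - snd q + \<bar>fst p - fst q\<bar> * exp (- m0)"
proof -
  obtain m0 where "m0 \<ge> max (snd p) (snd q)"
    and e: "(if \<bar>fst p - fst q\<bar> \<le> 2 * exp (max (snd p) (snd q))
    then 2 * max (snd p) (snd q) + \<bar>fst p - fst q\<bar> * exp (- max (snd p) (snd q))
    else 2 * ln (\<bar>fst p - fst q\<bar> / 2) + 2) = 2 * m0 + \<bar>fst p - fst q\<bar> * exp (- m0)"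
    using V_opt[OF abs_ge_zero] by blast
  then show ?thesis unfolding dH_V by (intro exI[of _ m0]) (simp add: e)
qed

lemma dH_vert: "dH (x, a) (x, b) = \<bar>a - b\<bar>"
  by (simp add: dH_def max_def)

lemma metric_H: "Metric_space UNIV dH"
proof
  fix x y :: "real \<times> real"
  obtain m0 where m0: "m0 \<ge> max (snd x) (snd y)" "dH x y = 2 * m0 - snd x - snd y + \<bar>fst x - fst y\<bar> * exp (- m0)"
    using dH_opt by blast
  show "0 \<le> dH x y" using m0 by (simp add: add_nonneg_nonneg)
  show "dH x y = dH y x" by (simp add: dH_def max.commute abs_minus_commute)
  show "dH x y = 0 \<longleftrightarrow> x = y"
  proof
    assume "dH x y = 0"
    then have "2 * m0 - snd x - snd y = 0" "\<bar>fst x - fst y\<bar> * exp (- m0) = 0"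
      using m0 by (smt (verit) max.bounded_iff mult_nonneg_nonneg abs_ge_zero exp_ge_zero)+
    then show "x = y" using m0(1) by (simp add: prod_eq_iff)
  next
    assume "x = y" then show "dH x y = 0" by (simp add: dH_def)
  qed
next
  fix x y z :: "real \<times> real"
  obtain m1 where m1: "m1 \<ge> max (snd x) (snd y)" "dH x y = 2 * m1 - snd x - snd y + \<bar>fst x - fst y\<bar> * exp (- m1)"
    using dH_opt by blast
  obtain m2 where m2: "m2 \<ge> max (snd y) (snd z)" "dH y z = 2 * m2 - snd y - snd z + \<bar>fst y - fst z\<bar> * exp (- m2)"
    using dH_opt by blast
  define m where "m = max m1 m2"
  have "dH x z \<le> 2 * m - snd x - snd z + \<bar>fst x - fst z\<bar> * exp (- m)"
    by (rule dH_le) (use m1 m2 in \<open>auto simp: m_def\<close>)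
  also have "\<bar>fst x - fst z\<bar> * exp (- m) \<le> (\<bar>fst x - fst y\<bar> + \<bar>fst y - fst z\<bar>) * exp (- m)"
    by (intro mult_right_mono) auto
  also have "\<dots> \<le> \<bar>fst x - fst y\<bar> * exp (- m1) + \<bar>fst y - fst z\<bar> * exp (- m2)"
    by (simp add: distrib_right m_def add_mono mult_left_mono)
  finally show "dH x z \<le> dH x y + dH y z" using m1 m2 by (simp add: m_def max_def split: if_splits)
qed

lemma ln_max: fixes a b :: real assumes "0 < a" "0 < b" shows "ln (max a b) = max (ln a) (ln b)"
proof (cases "a \<le> b")
  case True then have "ln a \<le> ln b" using assms by (subst ln_le_cancel_iff) auto
  then show ?thesis using True by (simp add: max_absorb2)
next
  case False then have "ln b \<le> ln a" using assms by (subst ln_le_cancel_iff) auto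
  then show ?thesis using False by (simp add: max_absorb1)
qed

lemma hyp_H: "gromov_hyperbolic UNIV dH"
proof (rule gromov_from_A[where A = "\<lambda>p q. ln (max (exp (max (snd p) (snd q))) \<bar>fst p - fst q\<bar>)"
      and h = snd and e = "ln 2" and c = 2])
  fix p q :: "real \<times> real"
  show "ln (max (exp (max (snd p) (snd q))) \<bar>fst p - fst q\<bar>) = ln (max (exp (max (snd q) (snd p))) \<bar>fst q - fst p\<bar>)"
    by (simp add: max.commute abs_minus_commute)
  define M where "M = max (snd p) (snd q)"
  define D where "D = \<bar>fst p - fst q\<bar>"
  have W: "max (exp M) D > 0" by (simp add: less_max_iff_disj)
  show "\<bar>dH p q - (2 * ln (max (exp (max (snd p) (snd q))) \<bar>fst p - fst q\<bar>) - snd p - snd q)\<bar> \<le> 2"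
  proof (cases "D \<le> 2 * exp M")
    case True
    have d: "dH p q = 2 * M - snd p - snd q + D * exp (- M)" using True by (simp add: dH_def M_def D_def)
    have a0: "0 \<le> D * exp (- M)" by (simp add: D_def)
    have a2: "D * exp (- M) \<le> 2"
    proof -
      have "D * exp (- M) \<le> 2 * exp M * exp (- M)" using True by (intro mult_right_mono) auto
      also have "\<dots> = 2" by (simp add: exp_minus)
      finally show ?thesis .
    qed
    have l1: "M \<le> ln (max (exp M) D)" using W by (simp add: ln_ge_iff)
    have "ln (max (exp M) D) \<le> ln (2 * exp M)" using W True by (simp add: ln_le_cancel_iff)
    also have "\<dots> = ln 2 + M" by (simp add: ln_mult)
    finally have l2: "ln (max (exp M) D) \<le> ln 2 + M" .
    have "ln 2 < (1::real)" by (rule ln_2_less_1)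
    then show ?thesis using d a0 a2 l1 l2 unfolding M_def[symmetric] D_def[symmetric] by (simp add: abs_le_iff)
  next
    case False
    then have Dp: "D / 2 > 0" using exp_gt_zero[of M] by linarith
    have d: "dH p q = 2 * ln (D / 2) + 2 - snd p - snd q" using False by (simp add: dH_def M_def D_def)
    have "exp M \<le> D" using False exp_gt_zero[of M] by linarith
    then have mx: "max (exp M) D = D" by (rule max_absorb2)
    have "ln (D / 2) = ln D - ln 2" using Dp by (simp add: ln_div)
    moreover have "ln 2 < (1::real)" by (rule ln_2_less_1)
    moreover have "0 < ln (2::real)" by simp
    ultimately show ?thesis using d mx unfolding M_def[symmetric] D_def[symmetric] by (simp add: abs_le_iff)
  qed
next
  fix p q r :: "real \<times> real"
  define W where "W = (\<lambda>p q :: real \<times> real. max (exp (max (snd p) (snd q))) \<bar>fst p - fst q\<bar>)"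
  have Wp: "W a b > 0" for a b by (simp add: W_def less_max_iff_disj)
  have "W p q \<le> 2 * max (W p r) (W r q)"
  proof -
    have e1: "exp (snd p) \<le> W p r" by (simp add: W_def le_max_iff_disj)
    have e2: "exp (snd q) \<le> W r q" by (simp add: W_def le_max_iff_disj)
    have "exp (max (snd p) (snd q)) = max (exp (snd p)) (exp (snd q))" by (simp add: max_def)
    also have "\<dots> \<le> max (W p r) (W r q)" using e1 e2 by (rule max.mono)
    finally have "exp (max (snd p) (snd q)) \<le> max (W p r) (W r q)" .
    moreover have "\<bar>fst p - fst q\<bar> \<le> \<bar>fst p - fst r\<bar> + \<bar>fst r - fst q\<bar>" by simp
    moreover have "\<bar>fst p - fst r\<bar> \<le> max (W p r) (W r q)" "\<bar>fst r - fst q\<bar> \<le> max (W p r) (W r q)"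
      by (simp_all add: W_def le_max_iff_disj)
    moreover have "0 \<le> max (W p r) (W r q)" using Wp[of p r] by simp
    ultimately have "exp (max (snd p) (snd q)) \<le> 2 * max (W p r) (W r q)"
      "\<bar>fst p - fst q\<bar> \<le> 2 * max (W p r) (W r q)" by linarith+
    then have "max (exp (max (snd p) (snd q))) \<bar>fst p - fst q\<bar> \<le> 2 * max (W p r) (W r q)"
      by (rule max.boundedI)
    then show ?thesis by (simp add: W_def)
  qed
  then have "ln (W p q) \<le> ln (2 * max (W p r) (W r q))"
    using Wp by (simp add: ln_le_cancel_iff less_max_iff_disj)
  also have "\<dots> = ln 2 + max (ln (W p r)) (ln (W r q))"
  proof -
    have Xp: "0 < max (W p r) (W r q)" using Wp[of p r] by (simp add: less_max_iff_disj)
    then have "ln (2 * max (W p r) (W r q)) = ln 2 + ln (max (W p r) (W r q))" by (simp add: ln_mult)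
    also have "ln (max (W p r) (W r q)) = max (ln (W p r)) (ln (W r q))" by (rule ln_max[OF Wp Wp])
    finally show ?thesis .
  qed
  finally show "ln (max (exp (max (snd p) (snd q))) \<bar>fst p - fst q\<bar>)
    \<le> max (ln (max (exp (max (snd p) (snd r))) \<bar>fst p - fst r\<bar>))
         (ln (max (exp (max (snd r) (snd q))) \<bar>fst r - fst q\<bar>)) + ln 2"
    by (simp add: W_def)
qed simp


lemma geo_H: "geodesic_metric UNIV dH"
  unfolding geodesic_metric_def
proof (intro ballI)
  fix x y :: "real \<times> real"
  obtain xp hp where xe: "x = (xp, hp)" by (cases x)
  obtain xq hq where ye: "y = (xq, hq)" by (cases y)
  obtain m0 where m0: "m0 \<ge> max hp hq" and dxy: "dH x y = 2 * m0 - hp - hq + \<bar>xp - xq\<bar> * exp (- m0)"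
    using dH_opt[of x y] by (auto simp: xe ye)
  define D where "D = \<bar>xp - xq\<bar>"
  define \<sigma> where "\<sigma> = sgn (xq - xp)"
  define s1 where "s1 = m0 - hp"
  define s2 where "s2 = s1 + D * exp (- m0)"
  define L where "L = dH x y"
  have L: "L = s2 + (m0 - hq)" by (simp add: L_def dxy s2_def s1_def D_def)
  have s: "0 \<le> s1" "s1 \<le> s2" "s2 \<le> L" using m0 by (auto simp: s1_def s2_def L D_def)
  have key: "xp + (s2 - s1) * exp m0 * \<sigma> = xq"
  proof -
    have "(s2 - s1) * exp m0 = D" by (simp add: s2_def exp_minus)
    then have "(s2 - s1) * exp m0 * \<sigma> = \<bar>xq - xp\<bar> * sgn (xq - xp)" by (simp add: D_def \<sigma>_def abs_minus_commute)
    then show ?thesis by (simp add: abs_mult_sgn)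
  qed
  define \<gamma> where "\<gamma> = (\<lambda>s. if s \<le> s1 then (xp, hp + s) else if s \<le> s2 then (xp + (s - s1) * exp m0 * \<sigma>, m0)
      else (xq, m0 - (s - s2)))"
  have G1: "\<gamma> s = (xp, hp + s)" if "s \<in> {0..s1}" for s using that by (simp add: \<gamma>_def)
  have G2: "\<gamma> s = (xp + (s - s1) * exp m0 * \<sigma>, m0)" if "s \<in> {s1..s2}" for s
    using that by (auto simp: \<gamma>_def s1_def)
  have G3: "\<gamma> s = (xq, m0 - (s - s2))" if "s \<in> {s2..L}" for s
  proof (cases "s = s2")
    case True
    have "\<gamma> s2 = (xp + (s2 - s1) * exp m0 * \<sigma>, m0)" using G2[of s2] s by simp
    then show ?thesis using True key by simp
  next
    case False
    then show ?thesis using that s by (auto simp: \<gamma>_def)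
  qed
  have M: "Metric_space UNIV dH" by (rule metric_H)
  have lip1: "dH (\<gamma> s) (\<gamma> u) \<le> \<bar>s - u\<bar>" if "s \<in> {0..s2}" "u \<in> {0..s2}" for s u
  proof (rule lip_concat[OF M s(1) s(2) _ _ _ that])
    fix s u assume "s \<in> {0..s1}" "u \<in> {0..s1}"
    then show "dH (\<gamma> s) (\<gamma> u) \<le> \<bar>s - u\<bar>" by (simp add: G1 dH_vert)
  next
    fix s u assume su: "s \<in> {s1..s2}" "u \<in> {s1..s2}"
    have "dH (\<gamma> s) (\<gamma> u) \<le> 2 * m0 - m0 - m0 + \<bar>(xp + (s - s1) * exp m0 * \<sigma>) - (xp + (u - s1) * exp m0 * \<sigma>)\<bar> * exp (- m0)"
      using dH_le[of "\<gamma> s" "\<gamma> u" m0] su by (simp add: G2)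
    also have "\<dots> = \<bar>s - u\<bar> * \<bar>\<sigma>\<bar>"
    proof -
      have eq: "(xp + (s - s1) * exp m0 * \<sigma>) - (xp + (u - s1) * exp m0 * \<sigma>) = ((s - u) * \<sigma>) * exp m0"
        by (simp add: algebra_simps)
      have eq2: "\<bar>((s - u) * \<sigma>) * exp m0\<bar> * exp (- m0) = \<bar>s - u\<bar> * \<bar>\<sigma>\<bar>"
        by (simp add: abs_mult exp_minus)
      show ?thesis unfolding eq eq2 by simp
    qed
    also have "\<dots> \<le> \<bar>s - u\<bar>" by (intro mult_left_le) (auto simp: \<sigma>_def abs_sgn_eq)
    finally show "dH (\<gamma> s) (\<gamma> u) \<le> \<bar>s - u\<bar>" .
  qed auto
  have lip: "dH (\<gamma> s) (\<gamma> u) \<le> \<bar>s - u\<bar>" if "s \<in> {0..L}" "u \<in> {0..L}" for s u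
  proof (rule lip_concat[OF M _ s(3) _ lip1 _ that])
    show "0 \<le> s2" using s by simp
  next
    fix s u assume "s \<in> {s2..L}" "u \<in> {s2..L}"
    then show "dH (\<gamma> s) (\<gamma> u) \<le> \<bar>s - u\<bar>" by (simp add: G3 dH_vert abs_minus_commute)
  qed auto
  have g0: "\<gamma> 0 = x" using G1[of 0] s by (simp add: xe)
  have gL: "\<gamma> L = y" using G3[of L] s by (simp add: ye L)
  show "\<exists>\<gamma>. \<gamma> 0 = x \<and> \<gamma> (dH x y) = y \<and> \<gamma> ` {0..dH x y} \<subseteq> UNIV \<and>
        (\<forall>s\<in>{0..dH x y}. \<forall>u\<in>{0..dH x y}. dH (\<gamma> s) (\<gamma> u) = \<bar>s - u\<bar>)"
    using geodesic_from_lip[OF M _ _ g0 gL[unfolded L_def] _ lip[unfolded L_def]] g0 gL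
    unfolding L_def by blast
qed

lemma cont_id_H: "continuous_map euclidean (Metric_space.mtopology UNIV dH) (\<lambda>x. x)"
proof (rule cont_to_mtop[OF metric_H])
  fix x :: "real \<times> real" and e :: real assume e: "e > 0"
  define E where "E = 1 + exp (- snd x)"
  have E: "E > 0" by (simp add: E_def add_pos_pos)
  define \<delta> where "\<delta> = min 1 (e / (2 * E))"
  have \<delta>: "\<delta> > 0" using e E by (simp add: \<delta>_def)
  show "\<exists>\<delta>>0. \<forall>y. dist y x < \<delta> \<longrightarrow> dH x y < e"
  proof (intro exI[of _ \<delta>] conjI allI impI \<delta>)
    fix y :: "real \<times> real" assume dy: "dist y x < \<delta>"
    have a: "\<bar>fst x - fst y\<bar> < \<delta>" using dist_fst_le[of y x] dy by (simp add: dist_real_def abs_minus_commute)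
    have b: "\<bar>snd x - snd y\<bar> < \<delta>" using dist_snd_le[of y x] dy by (simp add: dist_real_def abs_minus_commute)
    have "dH x y \<le> 2 * max (snd x) (snd y) - snd x - snd y + \<bar>fst x - fst y\<bar> * exp (- max (snd x) (snd y))"
      by (rule dH_le) simp
    also have "2 * max (snd x) (snd y) - snd x - snd y = \<bar>snd x - snd y\<bar>" by (simp add: max_def)
    also have "exp (- max (snd x) (snd y)) \<le> exp (- snd x)" by simp
    then have "\<bar>fst x - fst y\<bar> * exp (- max (snd x) (snd y)) \<le> \<delta> * exp (- snd x)"
      using a by (intro mult_mono) auto
    then have "\<bar>snd x - snd y\<bar> + \<bar>fst x - fst y\<bar> * exp (- max (snd x) (snd y)) < \<delta> * E"
      using b by (simp add: E_def algebra_simps)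
    also have "\<delta> * E \<le> e / 2" using E e by (simp add: \<delta>_def min_def field_simps split: if_splits)
    also have "\<dots> < e" using e by simp
    finally show "dH x y < e" .
  qed
qed simp

lemma proper_H: "proper_metric UNIV dH"
  unfolding proper_metric_def
proof (intro ballI allI)
  interpret Metric_space UNIV dH by (rule metric_H)
  fix p :: "real \<times> real" and \<rho> :: real
  define B where "B = \<rho> * exp (snd p + \<rho>)"
  define C1 where "C1 = {z :: (real \<times> real) \<times> real. max (snd p) (snd (fst z)) \<le> snd z}"
  define C2 where "C2 = {z :: (real \<times> real) \<times> real. 2 * snd z - snd p - snd (fst z) + \<bar>fst p - fst (fst z)\<bar> * exp (- snd z) \<le> \<rho>}"
  define Bx where "Bx = ({fst p - B..fst p + B} \<times> {snd p - \<rho>..snd p + \<rho>}) \<times> {snd p..snd p + \<rho>}"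
  define S where "S = Bx \<inter> (C1 \<inter> C2)"
  have cS: "compact S"
  proof -
    have "compact Bx" unfolding Bx_def by (intro compact_Times compact_Icc)
    moreover have "closed C1" unfolding C1_def
      by (intro closed_Collect_le continuous_intros)
    moreover have "closed C2" unfolding C2_def
      by (intro closed_Collect_le continuous_intros)
    ultimately show ?thesis unfolding S_def by (intro compact_Int_closed closed_Int)
  qed
  have ball: "mcball p \<rho> = fst ` S"
  proof
    show "mcball p \<rho> \<subseteq> fst ` S"
    proof
      fix q assume "q \<in> mcball p \<rho>"
      then have dq: "dH p q \<le> \<rho>" by (simp add: mcball_def)
      obtain m0 where m0: "m0 \<ge> max (snd p) (snd q)" and e: "dH p q = 2 * m0 - snd p - snd q + \<bar>fst p - fst q\<bar> * exp (- m0)"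
        using dH_opt by blast
      have t0: "0 \<le> \<bar>fst p - fst q\<bar> * exp (- m0)" by simp
      have r0: "0 \<le> \<rho>" using dq nonneg[of p q] by linarith
      have m1: "snd p \<le> m0" "snd q \<le> m0" using m0 by auto
      have mb: "m0 \<le> snd p + \<rho>" "snd p \<le> m0" "snd q \<le> m0" using m1 e dq t0 by linarith+
      have qb: "snd p - \<rho> \<le> snd q" "snd q \<le> snd p + \<rho>" using m1 e dq t0 by linarith+
      have "\<bar>fst p - fst q\<bar> * exp (- m0) \<le> \<rho>" using e dq m1 by linarith
      then have "\<bar>fst p - fst q\<bar> \<le> \<rho> * exp m0" by (simp add: exp_minus field_simps)
      also have "\<dots> \<le> B" unfolding B_def using mb r0 by (intro mult_left_mono) auto
      finally have xb: "\<bar>fst p - fst q\<bar> \<le> B" .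
      have "(q, m0) \<in> S" using mb qb xb m0 e dq
        by (auto simp: S_def Bx_def C1_def C2_def abs_le_iff mem_Times_iff)
      then show "q \<in> fst ` S" by force
    qed
  next
    show "fst ` S \<subseteq> mcball p \<rho>"
    proof
      fix q assume "q \<in> fst ` S"
      then obtain m where "(q, m) \<in> S" by force
      then have "max (snd p) (snd q) \<le> m" "2 * m - snd p - snd q + \<bar>fst p - fst q\<bar> * exp (- m) \<le> \<rho>"
        by (auto simp: S_def C1_def C2_def)
      then have "dH p q \<le> \<rho>" using dH_le[of p q m] by linarith
      then show "q \<in> mcball p \<rho>" by (simp add: mcball_def)
    qed
  qed
  have "compact (fst ` S)" by (intro compact_continuous_image continuous_intros cS)
  then have "compactin mtopology ((\<lambda>x. x) ` fst ` S)"
    by (intro image_compactin[OF _ cont_id_H]) simp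
  then show "compactin mtopology (mcball p \<rho>)" by (simp add: ball)
qed

lemma unbounded_H: "unbounded_metric UNIV dH"
  unfolding unbounded_metric_def
proof (intro conjI ballI allI)
  fix x :: "real \<times> real" and B :: real
  have "dH x (fst x, snd x + \<bar>B\<bar> + 1) = \<bar>B\<bar> + 1" using dH_vert[of "fst x" "snd x"] by simp
  then show "\<exists>y\<in>UNIV. B < dH x y" by (intro bexI[of _ "(fst x, snd x + \<bar>B\<bar> + 1)"]) auto
qed simp

definition phiH :: "nat \<Rightarrow> int \<times> rat \<Rightarrow> real \<times> real \<Rightarrow> real \<times> real" where
  "phiH n g p = (real n powi fst g * fst p + of_rat (snd g), snd p + of_int (fst g) * ln (real n))"

lemma exp_k: assumes "n \<ge> 1" shows "exp (of_int k * ln (real n)) = real n powi k"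
proof -
  have "exp (of_int k * ln (real n)) = real n powr of_int k" using assms by (simp add: powr_def)
  also have "\<dots> = real n powi k" using assms by (simp add: powr_real_of_int')
  finally show ?thesis .
qed

lemma phiH_iso: assumes n: "n \<ge> 1" shows "dH (phiH n g p) (phiH n g q) = dH p q"
proof -
  obtain k b where g: "g = (k, b)" by (cases g)
  define c where "c = of_int k * ln (real n)"
  define E where "E = real n powi k"
  have E: "E > 0" using n by (simp add: E_def)
  have Ec: "exp c = E" unfolding c_def E_def by (rule exp_k[OF n])
  have pp: "phiH n g p = (E * fst p + of_rat b, snd p + c)" "phiH n g q = (E * fst q + of_rat b, snd q + c)"
    by (simp_all add: phiH_def g E_def c_def)
  have "(E * fst p + of_rat b) - (E * fst q + of_rat b) = E * (fst p - fst q)" by (simp add: algebra_simps)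
  then have D: "\<bar>(E * fst p + of_rat b) - (E * fst q + of_rat b)\<bar> = E * \<bar>fst p - fst q\<bar>"
    using E by (simp add: abs_mult)
  have ex1: "exp (- (m + c)) * E = exp (- m)" for m
  proof -
    have "exp (- (m + c) + c) = exp (- (m + c)) * E" by (simp only: exp_add Ec)
    moreover have "- (m + c) + c = - m" by simp
    ultimately show ?thesis by simp
  qed
  have ex2: "exp (- (m - c)) = exp (- m) * E" for m
  proof -
    have "exp (- m + c) = exp (- m) * E" by (simp only: exp_add Ec)
    moreover have "- (m - c) = - m + c" by simp
    ultimately show ?thesis by simp
  qed
  have "dH (phiH n g p) (phiH n g q) \<le> dH p q"
  proof -
    obtain m0 where m0: "m0 \<ge> max (snd p) (snd q)" and e: "dH p q = 2 * m0 - snd p - snd q + \<bar>fst p - fst q\<bar> * exp (- m0)"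
      using dH_opt by blast
    have "max (snd (phiH n g p)) (snd (phiH n g q)) \<le> m0 + c" using m0 by (simp add: pp)
    then have "dH (phiH n g p) (phiH n g q) \<le> 2 * (m0 + c) - snd (phiH n g p) - snd (phiH n g q)
        + \<bar>fst (phiH n g p) - fst (phiH n g q)\<bar> * exp (- (m0 + c))"
      by (rule dH_le)
    also have "\<dots> = 2 * m0 - snd p - snd q + (\<bar>fst p - fst q\<bar> * (exp (- (m0 + c)) * E))"
      unfolding pp fst_conv snd_conv D by (simp only: mult_ac) simp
    also have "\<dots> = dH p q" unfolding ex1 e ..
    finally show ?thesis .
  qed
  moreover have "dH p q \<le> dH (phiH n g p) (phiH n g q)"
  proof -
    obtain m0 where m0: "m0 \<ge> max (snd (phiH n g p)) (snd (phiH n g q))" and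
      e: "dH (phiH n g p) (phiH n g q) = 2 * m0 - snd (phiH n g p) - snd (phiH n g q)
          + \<bar>fst (phiH n g p) - fst (phiH n g q)\<bar> * exp (- m0)"
      using dH_opt by blast
    have "max (snd p) (snd q) \<le> m0 - c" using m0 by (simp add: pp)
    then have "dH p q \<le> 2 * (m0 - c) - snd p - snd q + \<bar>fst p - fst q\<bar> * exp (- (m0 - c))"
      by (rule dH_le)
    also have "\<dots> = 2 * m0 - snd (phiH n g p) - snd (phiH n g q)
          + \<bar>fst (phiH n g p) - fst (phiH n g q)\<bar> * exp (- m0)"
      unfolding pp fst_conv snd_conv D ex2 by (simp only: mult_ac) simp
    also have "\<dots> = dH (phiH n g p) (phiH n g q)" using e by simp
    finally show ?thesis .
  qed
  ultimately show ?thesis by linarith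
qed

lemma isom_H: assumes n: "n \<ge> 1" shows "isometric_action (BS1 n) UNIV dH (phiH n)"
  unfolding isometric_action_def
proof (intro conjI ballI)
  show "group_action (BS1 n) UNIV (phiH n)"
  proof (rule group_action_from[OF group_BS1[OF n]])
    show "phiH n g x \<in> UNIV" for g x by simp
    show "phiH n g \<in> extensional UNIV" for g by simp
    fix g h :: "int \<times> rat" and x :: "real \<times> real"
    have N: "real n \<noteq> 0" using n by simp
    show "phiH n (g \<otimes>\<^bsub>BS1 n\<^esub> h) x = phiH n g (phiH n h x)"
      using N by (cases g, cases h) (simp add: phiH_def BS1_mult of_rat_add of_rat_mult of_rat_powi power_int_add algebra_simps)
  next
    fix x :: "real \<times> real"
    show "phiH n \<one>\<^bsub>BS1 n\<^esub> x = x" by (simp add: phiH_def BS1_one)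
  qed
  fix g x y show "dH (phiH n g x) (phiH n g y) = dH x y" by (rule phiH_iso[OF n])
qed

lemma cocompact_H: assumes n: "n \<ge> 2" shows "cocompact_action (BS1 n) UNIV dH (phiH n)"
  unfolding cocompact_action_def
proof (intro exI conjI)
  let ?K = "{0..1::real} \<times> {0..ln (real n)}"
  have "compactin (Metric_space.mtopology UNIV dH) ((\<lambda>x. x) ` ?K)"
    by (rule image_compactin[OF _ cont_id_H]) (simp add: compact_Times)
  then show "compactin (Metric_space.mtopology UNIV dH) ?K" by simp
  show "(\<Union>g\<in>carrier (BS1 n). phiH n g ` ?K) = UNIV"
  proof -
    have "p \<in> (\<Union>g\<in>carrier (BS1 n). phiH n g ` ?K)" for p :: "real \<times> real"
    proof -
    obtain x h where pe: "p = (x, h)" by (cases p)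
    have ln0: "ln (real n) > 0" using n by simp
    define k where "k = \<lfloor>h / ln (real n)\<rfloor>"
    define h0 where "h0 = h - of_int k * ln (real n)"
    have "of_int k \<le> h / ln (real n)" "h / ln (real n) < of_int k + 1" unfolding k_def by linarith+
    then have h0: "0 \<le> h0" "h0 \<le> ln (real n)" using ln0 by (auto simp: h0_def field_simps)
    define E where "E = real n powi k"
    have E: "E > 0" using n by (simp add: E_def)
    define z where "z = \<lfloor>x / E\<rfloor>"
    define x0 where "x0 = x / E - of_int z"
    have x0: "0 \<le> x0" "x0 \<le> 1" using frac_lt_1[of "x / E"] by (auto simp: x0_def z_def frac_def)
    define b :: rat where "b = of_nat n powi k * of_int z"
    have b: "b \<in> n_adic n" unfolding b_def using n by (intro n_adic_mult_powi Ints_n_adic) auto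
    have "of_rat b = E * of_int z" by (simp add: b_def E_def of_rat_mult of_rat_powi)
    then have "phiH n (k, b) (x0, h0) = p" using E by (simp add: phiH_def pe E_def[symmetric] x0_def h0_def field_simps)
    moreover have "(x0, h0) \<in> ?K" using x0 h0 by simp
    moreover have "(k, b) \<in> carrier (BS1 n)" using b by (simp add: BS1_carrier)
    ultimately show "p \<in> (\<Union>g\<in>carrier (BS1 n). phiH n g ` ?K)" by force
    qed
    then show ?thesis by blast
  qed
qed


lemma T1_iff: "p \<in> T 1 \<longleftrightarrow> snd p = 0"
proof
  assume "p \<in> T 1"
  then have "snd p \<in> \<int>" "0 \<le> snd p" "snd p < 1" by (auto simp: T_def Zn_def)
  then show "snd p = 0" by (metis Ints_cases of_int_0_le_iff of_int_less_1_iff order_antisym_conv not_less zero_le_imp_eq_int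
      of_int_0 int_one_le_iff_zero_less linorder_not_le)
next
  assume "snd p = 0" then show "p \<in> T 1" by (simp add: T_def Zn_def)
qed

lemma T1_iff': "p \<in> T (Suc 0) \<longleftrightarrow> snd p = 0"
  using T1_iff by simp

lemma br1: "br 1 0 u = (u, 0)" "br (Suc 0) 0 u = (u, 0)" by (simp_all add: br_def red_def)

lemma dT1: assumes "p \<in> T 1" "q \<in> T 1" shows "dT 1 p q = \<bar>fst p - fst q\<bar>"
proof -
  have "p = br 1 0 (fst p)" "q = br 1 0 (fst q)" using assms by (simp_all add: T1_iff' br1 prod_eq_iff)
  then show ?thesis using dT_br[of 1 0 "fst p" "fst q"] by (simp add: Zn_Ints)
qed

lemma dT1': "p \<in> T (Suc 0) \<Longrightarrow> q \<in> T (Suc 0) \<Longrightarrow> dT (Suc 0) p q = \<bar>fst p - fst q\<bar>"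
  using dT1 by simp

definition phiL :: "int \<times> rat \<Rightarrow> real \<times> real \<Rightarrow> real \<times> real" where
  "phiL g p = (if p \<in> T 1 then (fst p + of_rat (snd g), snd p) else undefined)"

lemma isom_L: "isometric_action (BS1 1) (T 1) (dT 1) phiL"
  unfolding isometric_action_def
proof (intro conjI ballI)
  show "group_action (BS1 1) (T 1) phiL"
  proof (rule group_action_from[OF group_BS1])
    show "phiL g x \<in> T 1" if "x \<in> T 1" for g x using that by (simp add: phiL_def T1_iff T1_iff')
    show "phiL g \<in> extensional (T 1)" for g by (simp add: phiL_def extensional_def)
    fix g h x assume "x \<in> T 1"
    then show "phiL (g \<otimes>\<^bsub>BS1 1\<^esub> h) x = phiL g (phiL h x)"
      by (cases g, cases h) (simp add: phiL_def BS1_mult T1_iff T1_iff' of_rat_add)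
  next
    fix x assume "x \<in> T 1" then show "phiL \<one>\<^bsub>BS1 1\<^esub> x = x" by (simp add: phiL_def BS1_one)
  qed simp
  fix g x y assume "x \<in> T 1" "y \<in> T 1"
  then show "dT 1 (phiL g x) (phiL g y) = dT 1 x y"
    by (simp add: dT1 dT1' phiL_def T1_iff T1_iff')
qed

lemma cocompact_L: "cocompact_action (BS1 1) (T 1) (dT 1) phiL"
  unfolding cocompact_action_def
proof (intro exI conjI)
  let ?K = "br 1 0 ` {0..1}"
  note br = br1
  show "compactin (Metric_space.mtopology (T 1) (dT 1)) ?K"
    by (rule image_compactin[OF _ cont_br]) (auto intro: Zn_Ints)
  have "p \<in> (\<Union>g\<in>carrier (BS1 1). phiL g ` ?K)" if p: "p \<in> T 1" for p
  proof -
    obtain h where pe: "p = (h, 0)" using p by (cases p) (simp add: T1_iff T1_iff')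
    define u where "u = h - of_int \<lfloor>h\<rfloor>"
    have u: "u \<in> {0..1}" using frac_lt_1[of h] by (auto simp: u_def frac_def)
    have "phiL (0, of_int \<lfloor>h\<rfloor>) (br 1 0 u) = p" by (simp add: br phiL_def T1_iff T1_iff' pe u_def)
    moreover have "(0, of_int \<lfloor>h\<rfloor>) \<in> carrier (BS1 1)" by (simp add: BS1_carrier Ints_n_adic)
    ultimately show ?thesis using u by force
  qed
  moreover have "phiL g x \<in> T 1" if "x \<in> ?K" for g x using that by (auto simp: br phiL_def T1_iff T1_iff')
  ultimately show "(\<Union>g\<in>carrier (BS1 1). phiL g ` ?K) = T 1" by blast
qed

lemma bound_L: "\<forall>z\<in>T 1. \<forall>R::real. \<exists>C::real. \<forall>g\<in>carrier (BS1 1). \<bar>fst g\<bar> \<le> R \<longrightarrow> dT 1 z (phiL g z) \<le> R \<longrightarrow> \<bar>of_rat (snd g)\<bar> \<le> C"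
proof (intro ballI allI)
  fix z :: "real \<times> real" and R :: real assume z: "z \<in> T 1"
  show "\<exists>C::real. \<forall>g\<in>carrier (BS1 1). \<bar>fst g\<bar> \<le> R \<longrightarrow> dT 1 z (phiL g z) \<le> R \<longrightarrow> \<bar>of_rat (snd g)\<bar> \<le> C"
    using z by (intro exI[of _ R]) (simp add: dT1' phiL_def T1_iff T1_iff')
qed

lemma bound_H: assumes n: "n \<ge> 1"
  shows "\<forall>z\<in>UNIV. \<forall>R::real. \<exists>C::real. \<forall>g\<in>carrier (BS1 n). \<bar>fst g\<bar> \<le> R \<longrightarrow> dH z (phiH n g z) \<le> R \<longrightarrow> \<bar>of_rat (snd g)\<bar> \<le> C"
proof (intro ballI allI)
  fix z :: "real \<times> real" and R :: real
  obtain x h where ze: "z = (x, h)" by (cases z)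
  define Mb where "Mb = (R + 2 * h + R * ln (real n)) / 2"
  define C where "C = \<bar>R\<bar> * exp Mb + \<bar>x\<bar> + real n powi \<lceil>R\<rceil> * \<bar>x\<bar>"
  show "\<exists>C::real. \<forall>g\<in>carrier (BS1 n). \<bar>fst g\<bar> \<le> R \<longrightarrow> dH z (phiH n g z) \<le> R \<longrightarrow> \<bar>of_rat (snd g)\<bar> \<le> C"
  proof (intro exI[of _ C] ballI impI)
    fix g :: "int \<times> rat" assume "g \<in> carrier (BS1 n)" and kR: "\<bar>fst g\<bar> \<le> R"
      and dR: "dH z (phiH n g z) \<le> R"
    obtain k b where ge: "g = (k, b)" by (cases g)
    define E where "E = real n powi k"
    have E: "E > 0" using n by (simp add: E_def)
    have ph: "phiH n g z = (E * x + of_rat b, h + of_int k * ln (real n))" by (simp add: phiH_def ge ze E_def)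
    obtain m0 where m0: "m0 \<ge> max (snd z) (snd (phiH n g z))"
      and e: "dH z (phiH n g z) = 2 * m0 - snd z - snd (phiH n g z) + \<bar>fst z - fst (phiH n g z)\<bar> * exp (- m0)"
      using dH_opt by blast
    have t0: "0 \<le> \<bar>fst z - fst (phiH n g z)\<bar> * exp (- m0)" by simp
    have ln0: "0 \<le> ln (real n)" using n by simp
    have "of_int k * ln (real n) \<le> R * ln (real n)" using kR ln0 by (intro mult_right_mono) (auto simp: ge)
    moreover have "2 * m0 - snd z - snd (phiH n g z) \<le> R" using e dR t0 by linarith
    ultimately have "m0 \<le> Mb" using ph by (simp add: Mb_def ze)
    have "\<bar>fst z - fst (phiH n g z)\<bar> * exp (- m0) \<le> R" using e dR m0 by auto
    then have "\<bar>fst z - fst (phiH n g z)\<bar> \<le> R * exp m0" by (simp add: exp_minus field_simps)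
    also have "\<dots> \<le> \<bar>R\<bar> * exp Mb" using \<open>m0 \<le> Mb\<close> by (intro mult_mono) auto
    finally have A0: "\<bar>fst z - fst (phiH n g z)\<bar> \<le> \<bar>R\<bar> * exp Mb" .
    have A: "\<bar>x - (E * x + of_rat b)\<bar> \<le> \<bar>R\<bar> * exp Mb" using A0 unfolding ph by (simp add: ze)
    have "E \<le> real n powi \<lceil>R\<rceil>" unfolding E_def
      by (rule power_int_increasing) (use kR n in \<open>auto simp: le_ceiling_iff ge\<close>)
    then have B: "E * \<bar>x\<bar> \<le> real n powi \<lceil>R\<rceil> * \<bar>x\<bar>" by (intro mult_right_mono) auto
    have e: "\<bar>E * x\<bar> = E * \<bar>x\<bar>" using E by (simp add: abs_mult)
    have "\<bar>(of_rat b :: real)\<bar> \<le> \<bar>x - (E * x + of_rat b)\<bar> + \<bar>x\<bar> + E * \<bar>x\<bar>"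
      unfolding e[symmetric] by (smt (verit))
    then show "\<bar>of_rat (snd g)\<bar> \<le> C" using A B by (simp add: C_def ge)
  qed
qed



lemma tree_disp0:
  assumes n: "n \<ge> 1" and g: "(k, b) \<in> carrier (BS1 n)" and z: "(h, r0) \<in> T n" and dR: "dT n (h, r0) (phiT n (k, b) (h, r0)) \<le> R"
  shows "\<bar>of_int k\<bar> \<le> R \<and> (r0 - of_rat b - real n powi k * r0) * real n powi \<lfloor>h + R\<rfloor> \<in> \<int>"
proof -
  define zz where "zz = of_rat b + real n powi k * r0"
  have wf: "phiT n (k, b) (h, r0) = (h - of_int k, red n (h - of_int k) zz)" using z by (simp add: phiT_def zz_def)
  have w: "(h - of_int k, red n (h - of_int k) zz) \<in> T n" using phiT_T[OF n g z] by (simp only: wf)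
  have dR': "dT n (h, r0) (h - of_int k, red n (h - of_int k) zz) \<le> R" using dR by (simp only: wf)
  have "\<bar>fst (h, r0) - fst (h - of_int k, red n (h - of_int k) zz)\<bar> \<le> R" using dT_height[OF n z w] dR' by linarith
  then have kR: "\<bar>of_int k\<bar> \<le> R" by simp
  have r0: "r0 \<in> Zn n" using z T_Zn by fastforce
  have zzZ: "zz \<in> Zn n" unfolding zz_def using g r0 n by (auto simp: BS1_carrier intro!: Zn_add n_adic_Zn Zn_mult_powi)
  have Z: "r0 - red n (h - of_int k) zz \<in> Zn n" using r0 red_Zn[OF n zzZ] by (rule Zn_diff)
  define J where "J = Jt n (max h (h - of_int k)) (r0 - red n (h - of_int k) zz)"
  have Jge: "max h (h - of_int k) \<le> J" unfolding J_def by (rule Jt_ge[OF Z n])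
  have "dT n (h, r0) (h - of_int k, red n (h - of_int k) zz) = 2 * J - h - (h - of_int k)"
    using z w by (simp add: dT_def J_def)
  then have "J \<le> h + R" using dR' kR Jge by (simp add: abs_le_iff)
  then have g1: "good n (r0 - red n (h - of_int k) zz) (h + R)"
    using good_mono[OF n Jt_good[OF Z n]] unfolding J_def by blast
  have g2: "good n (red n (h - of_int k) zz - zz) (h + R)"
    by (rule good_mono[OF n red_good[OF n]]) (use kR in \<open>simp add: abs_le_iff\<close>)
  have "good n (r0 - zz) (h + R)" using good_add[OF g1 g2] by simp
  then show ?thesis using kR by (simp add: good_def zz_def algebra_simps)
qed

lemma tree_disp:
  assumes n: "n \<ge> 1" and g: "g \<in> carrier (BS1 n)" and z: "z \<in> T n" and dR: "dT n z (phiT n g z) \<le> R"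
  shows "\<bar>fst g\<bar> \<le> R \<and> (snd z - of_rat (snd g) - real n powi (fst g) * snd z) * real n powi \<lfloor>fst z + R\<rfloor> \<in> \<int>"
  using tree_disp0[of n "fst g" "snd g" "fst z" "snd z" R] assms by simp

lemma Ints_floor_eq: "x \<in> \<int> \<Longrightarrow> of_int \<lfloor>x\<rfloor> = (x::real)"
  by (auto elim: Ints_cases)

lemma finite_cands:
  fixes C R r0 :: real
  assumes n: "n \<ge> 1"
  shows "finite {g \<in> carrier (BS1 n). \<bar>real_of_int (fst g)\<bar> \<le> R \<and> \<bar>of_rat (snd g)\<bar> \<le> C \<and>
    (r0 - of_rat (snd g) - real n powi (fst g) * r0) * real n powi N \<in> \<int>}" (is "finite ?S")
proof -
  define v where "v = (\<lambda>g :: int \<times> rat. (r0 - of_rat (snd g) - real n powi (fst g) * r0) * real n powi N)"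
  define f where "f = (\<lambda>g. (fst g, \<lfloor>v g\<rfloor>))"
  have P: "real n powi N > 0" using n by simp
  have "inj_on f ?S"
  proof (rule inj_onI)
    fix g g' assume gS: "g \<in> ?S" and g'S: "g' \<in> ?S" and e: "f g = f g'"
    have k: "fst g = fst g'" using e by (simp add: f_def)
    have a1: "of_int \<lfloor>v g\<rfloor> = v g" using gS by (intro Ints_floor_eq) (simp add: v_def)
    have a2: "of_int \<lfloor>v g'\<rfloor> = v g'" using g'S by (intro Ints_floor_eq) (simp add: v_def)
    have "\<lfloor>v g\<rfloor> = \<lfloor>v g'\<rfloor>" using e by (simp add: f_def)
    then have "v g = v g'" using a1 a2 by metis
    then have "(of_rat (snd g) :: real) = of_rat (snd g')" using P k n by (simp add: v_def)
    then have "snd g = snd g'" using n by simp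
    then show "g = g'" using k by (simp add: prod_eq_iff)
  qed
  moreover have "f ` ?S \<subseteq> {-\<lceil>R\<rceil>..\<lceil>R\<rceil>} \<times> {-\<lceil>(\<bar>r0\<bar> + C + real n powi \<lceil>R\<rceil> * \<bar>r0\<bar>) * real n powi N\<rceil>..\<lceil>(\<bar>r0\<bar> + C + real n powi \<lceil>R\<rceil> * \<bar>r0\<bar>) * real n powi N\<rceil>}"
  proof
    fix y assume "y \<in> f ` ?S"
    then obtain g where gS: "g \<in> ?S" and y: "y = f g" by blast
    obtain k b where ge: "g = (k, b)" by (cases g)
    have kR: "\<bar>real_of_int k\<bar> \<le> R" and bC: "\<bar>of_rat b\<bar> \<le> C" and vi: "v g \<in> \<int>" using gS by (auto simp: ge v_def)
    have k1: "k \<le> \<lceil>R\<rceil>" "- k \<le> \<lceil>R\<rceil>" using kR by (auto simp: abs_le_iff le_ceiling_iff)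
    define Bd where "Bd = (\<bar>r0\<bar> + C + real n powi \<lceil>R\<rceil> * \<bar>r0\<bar>) * real n powi N"
    have E: "real n powi k \<le> real n powi \<lceil>R\<rceil>" by (rule power_int_increasing) (use k1 n in auto)
    have "\<bar>r0 - of_rat b - real n powi k * r0\<bar> \<le> \<bar>r0\<bar> + C + real n powi \<lceil>R\<rceil> * \<bar>r0\<bar>"
    proof -
      have "\<bar>real n powi k * r0\<bar> \<le> real n powi \<lceil>R\<rceil> * \<bar>r0\<bar>" using E n by (simp add: abs_mult mult_right_mono)
      then show ?thesis using bC by linarith
    qed
    then have "\<bar>v g\<bar> \<le> Bd" using P by (simp add: v_def ge Bd_def abs_mult mult_right_mono)
    moreover have "of_int \<lfloor>v g\<rfloor> = v g" using vi by (rule Ints_floor_eq)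
    ultimately have "of_int \<lfloor>v g\<rfloor> \<le> Bd" "of_int (- \<lfloor>v g\<rfloor>) \<le> Bd" by (auto simp: abs_le_iff)
    then have "\<lfloor>v g\<rfloor> \<le> \<lceil>Bd\<rceil>" "- \<lfloor>v g\<rfloor> \<le> \<lceil>Bd\<rceil>"
      using ceiling_mono by (metis ceiling_of_int)+
    then show "y \<in> {-\<lceil>R\<rceil>..\<lceil>R\<rceil>} \<times> {-\<lceil>(\<bar>r0\<bar> + C + real n powi \<lceil>R\<rceil> * \<bar>r0\<bar>) * real n powi N\<rceil>..\<lceil>(\<bar>r0\<bar> + C + real n powi \<lceil>R\<rceil> * \<bar>r0\<bar>) * real n powi N\<rceil>}"
      using k1 by (simp add: y f_def ge Bd_def)
  qed
  then have "finite (f ` ?S)" by (rule finite_subset) simp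
  ultimately show ?thesis using finite_imageD by blast
qed

lemma PPH_from:
  fixes Y :: "(real \<times> real) set" and d2 :: "real \<times> real \<Rightarrow> real \<times> real \<Rightarrow> real"
    and \<phi>2 :: "int \<times> rat \<Rightarrow> real \<times> real \<Rightarrow> real \<times> real"
  assumes n: "n \<ge> 1" and MY: "Metric_space Y d2" and U: "unbounded_metric Y d2" and P: "proper_metric Y d2"
    and G: "geodesic_metric Y d2" and H: "gromov_hyperbolic Y d2"
    and I: "isometric_action (BS1 n) Y d2 \<phi>2" and C: "cocompact_action (BS1 n) Y d2 \<phi>2"
    and bound: "\<forall>z\<in>Y. \<forall>R::real. \<exists>C::real. \<forall>g\<in>carrier (BS1 n). \<bar>fst g\<bar> \<le> R \<longrightarrow> d2 z (\<phi>2 g z) \<le> R \<longrightarrow> \<bar>of_rat (snd g)\<bar> \<le> C"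
  shows "PPH (BS1 n)"
proof -
  define X :: "nat \<Rightarrow> (real \<times> real) set" where "X = (\<lambda>i. if i = 0 then T n else Y)"
  define d :: "nat \<Rightarrow> real \<times> real \<Rightarrow> real \<times> real \<Rightarrow> real" where "d = (\<lambda>i. if i = 0 then dT n else d2)"
  define \<phi> :: "nat \<Rightarrow> int \<times> rat \<Rightarrow> real \<times> real \<Rightarrow> real \<times> real" where "\<phi> = (\<lambda>i. if i = 0 then phiT n else \<phi>2)"
  have A: "\<forall>i<2. Metric_space (X i) (d i) \<and> unbounded_metric (X i) (d i) \<and>
    proper_metric (X i) (d i) \<and> geodesic_metric (X i) (d i) \<and>
    gromov_hyperbolic (X i) (d i) \<and>
    isometric_action (BS1 n) (X i) (d i) (\<phi> i) \<and> cocompact_action (BS1 n) (X i) (d i) (\<phi> i)"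
  proof (intro allI impI)
    fix i :: nat assume "i < 2"
    then have "i = 0 \<or> i = 1" by auto
    then show "Metric_space (X i) (d i) \<and> unbounded_metric (X i) (d i) \<and>
    proper_metric (X i) (d i) \<and> geodesic_metric (X i) (d i) \<and>
    gromov_hyperbolic (X i) (d i) \<and>
    isometric_action (BS1 n) (X i) (d i) (\<phi> i) \<and> cocompact_action (BS1 n) (X i) (d i) (\<phi> i)"
      using metric_T[OF n] unbounded_T[OF n] proper_T[OF n] geo_T[OF n] hyp_T[OF n] isom_T[OF n] cocompact_T[OF n]
        MY U P G H I C by (auto simp: X_def d_def \<phi>_def)
  qed
  have B: "proper_action (BS1 n) (PiE {..<2} X) (l1_dist 2 d) (diag_action 2 \<phi>)"
    unfolding proper_action_def
  proof (intro ballI allI impI)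
    fix z r assume z: "z \<in> PiE {..<2} X" and r: "(r::real) > 0"
    have "z 0 \<in> X 0" "z 1 \<in> X 1" using z by (auto simp: PiE_iff)
    then have z0: "z 0 \<in> T n" and z1: "z 1 \<in> Y" by (simp_all add: X_def)
    obtain C :: real where C: "\<forall>g\<in>carrier (BS1 n). \<bar>fst g\<bar> \<le> r \<longrightarrow> d2 (z 1) (\<phi>2 g (z 1)) \<le> r \<longrightarrow> \<bar>of_rat (snd g)\<bar> \<le> C"
      using bound z1 by blast
    have l1: "l1_dist 2 d z (diag_action 2 \<phi> g z) = dT n (z 0) (phiT n g (z 0)) + d2 (z 1) (\<phi>2 g (z 1))" for g
      by (simp add: l1_dist_def diag_action_def numeral_2_eq_2 d_def \<phi>_def)
    have "{g \<in> carrier (BS1 n). l1_dist 2 d z (diag_action 2 \<phi> g z) \<le> r} \<subseteq>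
      {g \<in> carrier (BS1 n). \<bar>real_of_int (fst g)\<bar> \<le> r \<and> \<bar>of_rat (snd g)\<bar> \<le> C \<and>
        (snd (z 0) - of_rat (snd g) - real n powi (fst g) * snd (z 0)) * real n powi \<lfloor>fst (z 0) + r\<rfloor> \<in> \<int>}"
    proof
      fix g assume "g \<in> {g \<in> carrier (BS1 n). l1_dist 2 d z (diag_action 2 \<phi> g z) \<le> r}"
      then have g: "g \<in> carrier (BS1 n)" and s: "dT n (z 0) (phiT n g (z 0)) + d2 (z 1) (\<phi>2 g (z 1)) \<le> r"
        by (auto simp: l1)
      have "0 \<le> dT n (z 0) (phiT n g (z 0))" by (rule Metric_space.nonneg[OF metric_T[OF n]])
      moreover have "0 \<le> d2 (z 1) (\<phi>2 g (z 1))" by (rule Metric_space.nonneg[OF MY])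
      ultimately have s1: "dT n (z 0) (phiT n g (z 0)) \<le> r" and s2: "d2 (z 1) (\<phi>2 g (z 1)) \<le> r" using s by linarith+
      note td = tree_disp[OF n g z0 s1]
      have "\<bar>of_rat (snd g)\<bar> \<le> C" using C g td s2 by simp
      then show "g \<in> {g \<in> carrier (BS1 n). \<bar>real_of_int (fst g)\<bar> \<le> r \<and> \<bar>of_rat (snd g)\<bar> \<le> C \<and>
        (snd (z 0) - of_rat (snd g) - real n powi (fst g) * snd (z 0)) * real n powi \<lfloor>fst (z 0) + r\<rfloor> \<in> \<int>}"
        using g td by simp
    qed
    then show "finite {g \<in> carrier (BS1 n). l1_dist 2 d z (diag_action 2 \<phi> g z) \<le> r}"
      by (rule finite_subset) (rule finite_cands[OF n])
  qed
  show ?thesis unfolding PPH_def using A B by blast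
qed

theorem lemma3p11:
  fixes n :: nat
  assumes "n \<ge> 1"
  shows "PPH (BS1 n)"
proof (cases "n = 1")
  case True
  have o: "(1::nat) \<ge> 1" by simp
  show ?thesis unfolding True
    by (rule PPH_from[OF o metric_T[OF o] unbounded_T[OF o] proper_T[OF o] geo_T[OF o] hyp_T[OF o]
        isom_L cocompact_L bound_L])
next
  case False
  then have n2: "n \<ge> 2" using assms by simp
  show ?thesis
    by (rule PPH_from[OF assms metric_H unbounded_H proper_H geo_H hyp_H isom_H[OF assms]
        cocompact_H[OF n2] bound_H[OF assms]])
qed


end
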